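(* Let $G$ be a torsion-free hyperbolic group and $\mathcal{H}$ a peripheral structure of $G$. Let $T_1$ and $T_2$ be two metric $G$-trees such that, in each of them, the elliptic subgroups are exactly the subgroups of $G$ contained in conjugates of groups of $\mathcal{H}$. Then for any automorphism $\alpha$ of $G$ preserving $\mathcal{H}$ (sending each group in $\mathcal{H}$ to a conjugate of a group of the same conjugacy class), an element $g\in G$ has polynomial $\|\cdot\|_{T_1}$-growth under $\alpha$ if and only if it has polynomial $\|\cdot\|_{T_2}$-growth under $\alpha$.
   Context: A peripheral structure is a finite tuple of conjugacy classes of subgroups of $G$. A metric $G$-tree is a metric simplicial tree with an isometric $G$-action. For such a tree $T$ and $g\in G$, $\|g\|_T=\min_v d_T(v,gv)$, the minimum over vertices $v$ of $T$. An element $g$ has polynomial $\|\cdot\|_T$-growth under $\alpha$ if there is a polynomial $P\in\mathbb{Z}[X]$ with $\|\alpha^n(g)\|_T\le P(n)$ for all $n$. *)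

theory Defs
  imports "HOL-Algebra.Generated_Groups" "HOL-Computational_Algebra.Polynomial"
begin

definition finite_gen_set :: "('g, 'b) monoid_scheme \<Rightarrow> 'g set \<Rightarrow> bool" where
  "finite_gen_set G S \<longleftrightarrow> finite S \<and> S \<subseteq> carrier G \<and> generate G S = carrier G"

definition word_length :: "('g, 'b) monoid_scheme \<Rightarrow> 'g set \<Rightarrow> 'g \<Rightarrow> nat" where
  "word_length G S g = (LEAST n. \<exists>ws. length ws = n \<and> set ws \<subseteq> S \<union> (\<lambda>s. inv\<^bsub>G\<^esub> s) ` S
       \<and> foldr (\<lambda>a b. a \<otimes>\<^bsub>G\<^esub> b) ws \<one>\<^bsub>G\<^esub> = g)"

definition word_dist :: "('g, 'b) monoid_scheme \<Rightarrow> 'g set \<Rightarrow> 'g \<Rightarrow> 'g \<Rightarrow> real" where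
  "word_dist G S x y = real (word_length G S (inv\<^bsub>G\<^esub> x \<otimes>\<^bsub>G\<^esub> y))"

definition gromov_product :: "('g, 'b) monoid_scheme \<Rightarrow> 'g set \<Rightarrow> 'g \<Rightarrow> 'g \<Rightarrow> 'g \<Rightarrow> real" where
  "gromov_product G S x y w =
     (word_dist G S w x + word_dist G S w y - word_dist G S x y) / 2"

definition hyperbolic_group :: "('g, 'b) monoid_scheme \<Rightarrow> bool" where
  "hyperbolic_group G \<longleftrightarrow> group G \<and>
     (\<exists>S. finite_gen_set G S \<and> (\<exists>\<delta>\<ge>0. \<forall>x\<in>carrier G. \<forall>y\<in>carrier G. \<forall>z\<in>carrier G. \<forall>w\<in>carrier G.
        gromov_product G S x z w \<ge> min (gromov_product G S x y w) (gromov_product G S y z w) - \<delta>))"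

definition torsion_free :: "('g, 'b) monoid_scheme \<Rightarrow> bool" where
  "torsion_free G \<longleftrightarrow> (\<forall>g\<in>carrier G. g \<noteq> \<one>\<^bsub>G\<^esub> \<longrightarrow> (\<forall>n::nat. n > 0 \<longrightarrow> g [^]\<^bsub>G\<^esub> n \<noteq> \<one>\<^bsub>G\<^esub>))"

definition conjugate :: "('g, 'b) monoid_scheme \<Rightarrow> 'g \<Rightarrow> 'g set \<Rightarrow> 'g set" where
  "conjugate G x H = {x \<otimes>\<^bsub>G\<^esub> h \<otimes>\<^bsub>G\<^esub> inv\<^bsub>G\<^esub> x | h. h \<in> H}"

text \<open>A peripheral structure: a finite tuple of conjugacy classes of subgroups,
  given by a list of representatives.\<close>
definition peripheral_structure :: "('g, 'b) monoid_scheme \<Rightarrow> 'g set list \<Rightarrow> bool" where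
  "peripheral_structure G Hs \<longleftrightarrow> (\<forall>H\<in>set Hs. subgroup H G)"

definition preserves_peripheral :: "('g, 'b) monoid_scheme \<Rightarrow> 'g set list \<Rightarrow> ('g \<Rightarrow> 'g) \<Rightarrow> bool" where
  "preserves_peripheral G Hs \<alpha> \<longleftrightarrow>
     (\<forall>i<length Hs. \<exists>x\<in>carrier G. \<alpha> ` (Hs ! i) = conjugate G x (Hs ! i))"

fun is_walk :: "('v \<Rightarrow> 'v \<Rightarrow> bool) \<Rightarrow> 'v list \<Rightarrow> bool" where
  "is_walk E [] = False"
| "is_walk E [v] = True"
| "is_walk E (u # v # vs) = (E u v \<and> is_walk E (v # vs))"

fun walk_weight :: "('v \<Rightarrow> 'v \<Rightarrow> real) \<Rightarrow> 'v list \<Rightarrow> real" where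
  "walk_weight len [] = 0"
| "walk_weight len [v] = 0"
| "walk_weight len (u # v # vs) = len u v + walk_weight len (v # vs)"

definition simplicial_tree :: "'v set \<Rightarrow> ('v \<Rightarrow> 'v \<Rightarrow> bool) \<Rightarrow> bool" where
  "simplicial_tree V E \<longleftrightarrow> V \<noteq> {} \<and>
     (\<forall>u v. E u v \<longrightarrow> u \<in> V \<and> v \<in> V \<and> E v u \<and> u \<noteq> v) \<and>
     (\<forall>u\<in>V. \<forall>v\<in>V. \<exists>p. is_walk E p \<and> hd p = u \<and> last p = v) \<and>
     (\<nexists>c. distinct c \<and> length c \<ge> 3 \<and> is_walk E (c @ [hd c]))"

definition metric_simplicial_tree :: "'v set \<Rightarrow> ('v \<Rightarrow> 'v \<Rightarrow> bool) \<Rightarrow> ('v \<Rightarrow> 'v \<Rightarrow> real) \<Rightarrow> bool" where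
  "metric_simplicial_tree V E len \<longleftrightarrow> simplicial_tree V E \<and>
     (\<forall>u v. E u v \<longrightarrow> len u v > 0 \<and> len u v = len v u)"

definition tree_dist :: "('v \<Rightarrow> 'v \<Rightarrow> bool) \<Rightarrow> ('v \<Rightarrow> 'v \<Rightarrow> real) \<Rightarrow> 'v \<Rightarrow> 'v \<Rightarrow> real" where
  "tree_dist E len u v = Inf {walk_weight len p | p. is_walk E p \<and> hd p = u \<and> last p = v}"

definition metric_G_tree :: "('g, 'b) monoid_scheme \<Rightarrow> 'v set \<Rightarrow> ('v \<Rightarrow> 'v \<Rightarrow> bool)
    \<Rightarrow> ('v \<Rightarrow> 'v \<Rightarrow> real) \<Rightarrow> ('g \<Rightarrow> 'v \<Rightarrow> 'v) \<Rightarrow> bool" where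
  "metric_G_tree G V E len \<phi> \<longleftrightarrow> metric_simplicial_tree V E len \<and>
     (\<forall>g\<in>carrier G. bij_betw (\<phi> g) V V \<and>
        (\<forall>u\<in>V. \<forall>v\<in>V. E (\<phi> g u) (\<phi> g v) \<longleftrightarrow> E u v) \<and>
        (\<forall>u v. E u v \<longrightarrow> len (\<phi> g u) (\<phi> g v) = len u v)) \<and>
     (\<forall>v\<in>V. \<phi> \<one>\<^bsub>G\<^esub> v = v) \<and>
     (\<forall>g\<in>carrier G. \<forall>h\<in>carrier G. \<forall>v\<in>V. \<phi> (g \<otimes>\<^bsub>G\<^esub> h) v = \<phi> g (\<phi> h v))"

text \<open>A subgroup is elliptic if it fixes a point of the (geometric realisation of the)
  tree: either a vertex, or the midpoint of an edge, i.e. it leaves an edge invariant.\<close>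
definition elliptic :: "'v set \<Rightarrow> ('v \<Rightarrow> 'v \<Rightarrow> bool) \<Rightarrow> ('g \<Rightarrow> 'v \<Rightarrow> 'v) \<Rightarrow> 'g set \<Rightarrow> bool" where
  "elliptic V E \<phi> K \<longleftrightarrow>
     (\<exists>v\<in>V. \<forall>k\<in>K. \<phi> k v = v) \<or>
     (\<exists>u v. E u v \<and> (\<forall>k\<in>K. \<phi> k ` {u, v} = {u, v}))"

definition trans_length :: "'v set \<Rightarrow> ('v \<Rightarrow> 'v \<Rightarrow> bool) \<Rightarrow> ('v \<Rightarrow> 'v \<Rightarrow> real)
    \<Rightarrow> ('g \<Rightarrow> 'v \<Rightarrow> 'v) \<Rightarrow> 'g \<Rightarrow> real" where
  "trans_length V E len \<phi> g = (INF v\<in>V. tree_dist E len v (\<phi> g v))"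

definition polynomial_growth :: "'v set \<Rightarrow> ('v \<Rightarrow> 'v \<Rightarrow> bool) \<Rightarrow> ('v \<Rightarrow> 'v \<Rightarrow> real)
    \<Rightarrow> ('g \<Rightarrow> 'v \<Rightarrow> 'v) \<Rightarrow> ('g \<Rightarrow> 'g) \<Rightarrow> 'g \<Rightarrow> bool" where
  "polynomial_growth V E len \<phi> \<alpha> g \<longleftrightarrow>
     (\<exists>P :: int poly. \<forall>n::nat. trans_length V E len \<phi> ((\<alpha> ^^ n) g) \<le> of_int (poly P (int n)))"

end

theory Submission
  imports Defs
begin


fun red :: "'v list \<Rightarrow> bool" where
  "red (a # b # c # xs) = (a \<noteq> c \<and> red (b # c # xs))"
| "red _ = True"

fun edges :: "'v list \<Rightarrow> ('v \<times> 'v) set" where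
  "edges (a # b # xs) = insert (a, b) (edges (b # xs))"
| "edges _ = {}"

lemma is_walk_Cons: "is_walk E (x # xs) \<Longrightarrow> xs \<noteq> [] \<Longrightarrow> is_walk E xs"
  by (cases xs) auto

lemma is_walk_append:
  "is_walk E (xs @ x # ys) \<longleftrightarrow> is_walk E (xs @ [x]) \<and> is_walk E (x # ys)"
proof (induction xs)
  case Nil then show ?case by simp
next
  case (Cons a xs) then show ?case by (cases xs) auto
qed

lemma walk_weight_append:
  "walk_weight len (xs @ x # ys) = walk_weight len (xs @ [x]) + walk_weight len (x # ys)"
proof (induction xs)
  case Nil then show ?case by simp
next
  case (Cons a xs) then show ?case by (cases xs) auto
qed

lemma edges_append:
  "edges (xs @ x # ys) = edges (xs @ [x]) \<union> edges (x # ys)"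
proof (induction xs)
  case Nil then show ?case by simp
next
  case (Cons a xs) then show ?case by (cases xs) auto
qed

lemma red_Cons: "red (x # xs) \<Longrightarrow> red xs"
  by (induction xs rule: red.induct) auto

lemma red_Cons_iff: "red (a # l) \<longleftrightarrow> (Suc 0 < length l \<longrightarrow> a \<noteq> l ! 1) \<and> red l"
proof (cases l)
  case (Cons b l') then show ?thesis by (cases l') auto
qed simp

lemma red_append:
  "red (xs @ [p, b]) \<Longrightarrow> red (b # c # ys) \<Longrightarrow> p \<noteq> c \<Longrightarrow> red (xs @ p # b # c # ys)"
proof (induction xs)
  case Nil then show ?case by simp
next
  case (Cons x xs)
  have "red (xs @ [p, b])" using Cons.prems(1) red_Cons by (metis append_Cons)
  with Cons have IH: "red (xs @ p # b # c # ys)" by blast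
  have "x \<noteq> (xs @ [p, b]) ! 1" using Cons.prems(1) by (simp add: red_Cons_iff)
  moreover have "(xs @ [p, b]) ! 1 = (xs @ p # b # c # ys) ! 1"
    by (cases xs) (auto simp: nth_append)
  ultimately show ?case using IH by (simp add: red_Cons_iff)
qed

lemma not_red_split: "\<not> red p \<Longrightarrow> \<exists>xs a b ys. p = xs @ a # b # a # ys"
proof (induction p rule: red.induct)
  case (1 a b c xs)
  show ?case
  proof (cases "a = c")
    case True then show ?thesis by (metis append_Nil)
  next
    case False
    with 1 obtain xs' a' b' ys where "b # c # xs = xs' @ a' # b' # a' # ys" by auto
    then have "a # b # c # xs = (a # xs') @ a' # b' # a' # ys" by simp
    then show ?thesis by blast
  qed
qed auto

lemma red_nth: "red p \<longleftrightarrow> (\<forall>i. Suc (Suc i) < length p \<longrightarrow> p ! i \<noteq> p ! Suc (Suc i))"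
proof (induction p rule: red.induct)
  case (1 a b c xs)
  have "(\<forall>i. Suc (Suc i) < length (a # b # c # xs) \<longrightarrow> (a # b # c # xs) ! i \<noteq> (a # b # c # xs) ! Suc (Suc i))
     \<longleftrightarrow> a \<noteq> c \<and> (\<forall>i. Suc (Suc i) < length (b # c # xs) \<longrightarrow> (b # c # xs) ! i \<noteq> (b # c # xs) ! Suc (Suc i))"
    (is "?L \<longleftrightarrow> ?R")
  proof
    assume ?L
    then show ?R by (metis Suc_less_eq length_Cons nth_Cons_0 nth_Cons_Suc zero_less_Suc)
  next
    assume ?R
    show ?L
    proof (intro allI impI)
      fix i assume "Suc (Suc i) < length (a # b # c # xs)"
      then show "(a # b # c # xs) ! i \<noteq> (a # b # c # xs) ! Suc (Suc i)"
        using \<open>?R\<close> by (cases i) auto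
    qed
  qed
  with 1 show ?case by simp
qed (auto)

lemma red_rev: "red p \<Longrightarrow> red (rev p)"
  unfolding red_nth
proof (intro allI impI)
  fix i assume a: "\<forall>i. Suc (Suc i) < length p \<longrightarrow> p ! i \<noteq> p ! Suc (Suc i)"
    and b: "Suc (Suc i) < length (rev p)"
  let ?j = "length p - Suc (Suc (Suc i))"
  have "Suc (Suc ?j) < length p" using b by auto
  with a have "p ! ?j \<noteq> p ! Suc (Suc ?j)" by blast
  moreover have "rev p ! i = p ! Suc (Suc ?j)" using b by (simp add: rev_nth Suc_diff_Suc)
  moreover have "rev p ! Suc (Suc i) = p ! ?j" using b by (simp add: rev_nth)
  ultimately show "rev p ! i \<noteq> rev p ! Suc (Suc i)" by simp
qed

lemma red_take: "red p \<Longrightarrow> red (take n p)"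
  by (simp add: red_nth)

lemma red_drop: "red p \<Longrightarrow> red (drop n p)"
  by (simp add: red_nth)

lemma red_map: "red p \<Longrightarrow> inj_on f (set p) \<Longrightarrow> red (map f p)"
  by (simp add: red_nth inj_on_eq_iff)

lemma is_walk_nth: "is_walk E p \<Longrightarrow> Suc i < length p \<Longrightarrow> E (p ! i) (p ! Suc i)"
proof (induction p arbitrary: i rule: edges.induct)
  case (1 u v vs) then show ?case by (cases i) auto
qed auto

lemma is_walk_iff_nth: "is_walk E p \<longleftrightarrow> p \<noteq> [] \<and> (\<forall>i. Suc i < length p \<longrightarrow> E (p ! i) (p ! Suc i))"
proof (induction p rule: edges.induct)
  case (1 a b xs)
  show ?case
  proof
    assume "is_walk E (a # b # xs)"
    then show "a # b # xs \<noteq> [] \<and> (\<forall>i. Suc i < length (a # b # xs) \<longrightarrow> E ((a # b # xs) ! i) ((a # b # xs) ! Suc i))"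
      using is_walk_nth by blast
  next
    assume H: "a # b # xs \<noteq> [] \<and> (\<forall>i. Suc i < length (a # b # xs) \<longrightarrow> E ((a # b # xs) ! i) ((a # b # xs) ! Suc i))"
    then have "E a b" by force
    moreover have "\<forall>i. Suc i < length (b # xs) \<longrightarrow> E ((b # xs) ! i) ((b # xs) ! Suc i)"
    proof (intro allI impI)
      fix i assume "Suc i < length (b # xs)"
      then have "Suc (Suc i) < length (a # b # xs)" by simp
      with H have "E ((a # b # xs) ! Suc i) ((a # b # xs) ! Suc (Suc i))" by blast
      then show "E ((b # xs) ! i) ((b # xs) ! Suc i)" by simp
    qed
    ultimately show "is_walk E (a # b # xs)" using 1 by simp
  qed
qed auto

lemma is_walk_take: "is_walk E p \<Longrightarrow> 0 < n \<Longrightarrow> is_walk E (take n p)"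
  by (simp add: is_walk_iff_nth)

lemma is_walk_drop: "is_walk E p \<Longrightarrow> n < length p \<Longrightarrow> is_walk E (drop n p)"
  by (simp add: is_walk_iff_nth)

lemma is_walk_map:
  "is_walk E p \<Longrightarrow> (\<And>u v. E u v \<Longrightarrow> E' (f u) (f v)) \<Longrightarrow> is_walk E' (map f p)"
  by (induction p rule: edges.induct) auto

lemma walk_weight_map:
  "is_walk E p \<Longrightarrow> (\<And>u v. E u v \<Longrightarrow> len' (f u) (f v) = len u v) \<Longrightarrow>
   walk_weight len' (map f p) = walk_weight len p"
  by (induction p rule: edges.induct) auto

lemma edges_map: "edges (map f p) = (\<lambda>(x, y). (f x, f y)) ` edges p"
  by (induction p rule: edges.induct) auto

lemma edges_rev: "edges (rev p) = (edges p)\<inverse>"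
proof (induction p rule: edges.induct)
  case (1 a b xs)
  have "rev (a # b # xs) = rev (b # xs) @ [a]" by simp
  also have "\<dots> = rev xs @ b # [a]" by simp
  finally have "edges (rev (a # b # xs)) = edges (rev xs @ [b]) \<union> edges [b, a]"
    using edges_append[of "rev xs" b "[a]"] by simp
  then show ?case using 1 by auto
qed auto

lemma edges_set: "(x, y) \<in> edges p \<Longrightarrow> x \<in> set p \<and> y \<in> set p"
  by (induction p rule: edges.induct) auto

lemma edges_walk: "is_walk E p \<Longrightarrow> (x, y) \<in> edges p \<Longrightarrow> E x y"
  by (induction p rule: edges.induct) auto

lemma is_walk_rev:
  assumes sym: "\<And>u v. E u v \<Longrightarrow> E v u"
  shows "is_walk E p \<Longrightarrow> is_walk E (rev p)"
proof (induction p rule: edges.induct)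
  case (1 a b xs)
  have "rev (a # b # xs) = rev xs @ b # [a]" by simp
  moreover have "is_walk E (rev xs @ [b])" using 1 by simp
  moreover have "is_walk E [b, a]" using 1 sym by simp
  ultimately show ?case by (metis is_walk_append)
qed auto




locale gtree =
  fixes G :: "('g, 'b) monoid_scheme" and V :: "'v set" and E :: "'v \<Rightarrow> 'v \<Rightarrow> bool"
    and len :: "'v \<Rightarrow> 'v \<Rightarrow> real" and \<phi> :: "'g \<Rightarrow> 'v \<Rightarrow> 'v"
  assumes grp: "group G" and mgt: "metric_G_tree G V E len \<phi>"
begin

abbreviation d where "d \<equiv> tree_dist E len"

lemma mst: "metric_simplicial_tree V E len"
  using mgt unfolding metric_G_tree_def by simp
lemma st: "simplicial_tree V E"
  using mst unfolding metric_simplicial_tree_def by simp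
lemma st_edge: "E u v \<Longrightarrow> u \<in> V \<and> v \<in> V \<and> E v u \<and> u \<noteq> v"
  using st unfolding simplicial_tree_def by simp
lemma E_V: "E u v \<Longrightarrow> u \<in> V \<and> v \<in> V"
  using st_edge by simp
lemma E_sym: "E u v \<Longrightarrow> E v u"
  using st_edge by simp
lemma E_irr: "E u v \<Longrightarrow> u \<noteq> v"
  using st_edge by simp
lemma len_pos: "E u v \<Longrightarrow> len u v > 0"
  using mst unfolding metric_simplicial_tree_def by simp
lemma len_sym: "E u v \<Longrightarrow> len u v = len v u"
  using mst unfolding metric_simplicial_tree_def by blast
lemma V_ne: "V \<noteq> {}"
  using st unfolding simplicial_tree_def by simp
lemma conn: "u \<in> V \<Longrightarrow> v \<in> V \<Longrightarrow> \<exists>p. is_walk E p \<and> hd p = u \<and> last p = v"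
  using st unfolding simplicial_tree_def by simp
lemma nocyc: "distinct c \<Longrightarrow> length c \<ge> 3 \<Longrightarrow> is_walk E (c @ [hd c]) \<Longrightarrow> False"
  using st unfolding simplicial_tree_def by auto

lemma act_props: "g \<in> carrier G \<Longrightarrow> bij_betw (\<phi> g) V V \<and>
        (\<forall>u\<in>V. \<forall>v\<in>V. E (\<phi> g u) (\<phi> g v) \<longleftrightarrow> E u v) \<and>
        (\<forall>u v. E u v \<longrightarrow> len (\<phi> g u) (\<phi> g v) = len u v)"
  using mgt unfolding metric_G_tree_def by simp
lemma act_V: "g \<in> carrier G \<Longrightarrow> v \<in> V \<Longrightarrow> \<phi> g v \<in> V"
  using act_props unfolding bij_betw_def by blast
lemma act_inj: "g \<in> carrier G \<Longrightarrow> inj_on (\<phi> g) V"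
  using act_props unfolding bij_betw_def by blast
lemma act_E: "g \<in> carrier G \<Longrightarrow> E u v \<Longrightarrow> E (\<phi> g u) (\<phi> g v)"
proof -
  assume g: "g \<in> carrier G" and e: "E u v"
  then have "u \<in> V" "v \<in> V" using E_V by auto
  then show ?thesis using act_props[OF g] e by simp
qed
lemma act_len: "g \<in> carrier G \<Longrightarrow> E u v \<Longrightarrow> len (\<phi> g u) (\<phi> g v) = len u v"
  using act_props by simp
lemma act_one: "v \<in> V \<Longrightarrow> \<phi> \<one>\<^bsub>G\<^esub> v = v"
  using mgt unfolding metric_G_tree_def by simp
lemma act_mult: "g \<in> carrier G \<Longrightarrow> h \<in> carrier G \<Longrightarrow> v \<in> V \<Longrightarrow> \<phi> (g \<otimes>\<^bsub>G\<^esub> h) v = \<phi> g (\<phi> h v)"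
  using mgt unfolding metric_G_tree_def by simp
lemma act_inv1: "g \<in> carrier G \<Longrightarrow> v \<in> V \<Longrightarrow> \<phi> (inv\<^bsub>G\<^esub> g) (\<phi> g v) = v"
  by (metis act_mult act_one grp group.inv_closed group.l_inv)
lemma act_inv2: "g \<in> carrier G \<Longrightarrow> v \<in> V \<Longrightarrow> \<phi> g (\<phi> (inv\<^bsub>G\<^esub> g) v) = v"
  by (metis act_mult act_one grp group.inv_closed group.r_inv)

lemma walk_V: "is_walk E p \<Longrightarrow> hd p \<in> V \<Longrightarrow> set p \<subseteq> V"
  by (induction p rule: edges.induct) (auto dest: E_V)

lemma walk_weight_nonneg: "is_walk E p \<Longrightarrow> 0 \<le> walk_weight len p"
proof (induction p rule: edges.induct)
  case (1 a b xs)
  then show ?case using len_pos[of a b] by (cases xs) auto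
qed auto

lemma distinct_hd_last: "distinct w \<Longrightarrow> 2 \<le> length w \<Longrightarrow> hd w \<noteq> last w"
  by (cases w) auto

lemma red_distinct: "is_walk E p \<Longrightarrow> red p \<Longrightarrow> distinct p"
proof (induction p)
  case Nil then show ?case by simp
next
  case (Cons x w)
  show ?case
  proof (cases "w = []")
    case True then show ?thesis by simp
  next
    case False
    have "is_walk E w" using is_walk_Cons[OF Cons.prems(1) False] .
    moreover have "red w" using red_Cons[OF Cons.prems(2)] .
    ultimately have dw: "distinct w" using Cons.IH by blast
    have "x \<notin> set w"
    proof
      assume "x \<in> set w"
      then obtain j where j: "j < length w" "w ! j = x" by (metis in_set_conv_nth)
      consider "j = 0" | "j = 1" | "j \<ge> 2" by linarith
      then show False
      proof cases
        case 1
        have "Suc 0 < length (x # w)" using False by simp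
        then have "E ((x # w) ! 0) ((x # w) ! Suc 0)" by (rule is_walk_nth[OF Cons.prems(1)])
        then have "E x (w ! 0)" by simp
        then show False using j 1 E_irr by blast
      next
        case 2
        have "red (x # w)" by (rule Cons.prems(2))
        then have "Suc 0 < length w \<longrightarrow> x \<noteq> w ! 1" using red_Cons_iff[of x w] by blast
        then show False using j 2 by simp
      next
        case 3
        define c where "c = x # take j w"
        have "x \<notin> set (take j w)"
        proof
          assume "x \<in> set (take j w)"
          then obtain i where "i < length (take j w)" "take j w ! i = x" by (metis in_set_conv_nth)
          then have "i < j" "w ! i = w ! j" using j by auto
          with j show False using nth_eq_iff_index_eq[OF dw, of i j] by simp
        qed
        then have "distinct c" using dw c_def by simp
        moreover have "length c \<ge> 3" using 3 j c_def by simp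
        moreover have "is_walk E (c @ [hd c])"
        proof -
          have "take (Suc j) w = take j w @ [x]" using j by (simp add: take_Suc_conv_app_nth)
          then have "c @ [hd c] = take (Suc (Suc j)) (x # w)" using c_def by simp
          moreover have "is_walk E (take (Suc (Suc j)) (x # w))"
            by (rule is_walk_take[OF Cons.prems(1)]) simp
          ultimately show ?thesis by simp
        qed
        ultimately show False using nocyc by blast
      qed
    qed
    then show ?thesis using dw by simp
  qed
qed

lemma red_unique:
  "is_walk E p \<Longrightarrow> red p \<Longrightarrow> is_walk E p' \<Longrightarrow> red p' \<Longrightarrow> hd p = hd p' \<Longrightarrow> last p = last p' \<Longrightarrow> p = p'"
proof (induction p arbitrary: p')
  case Nil then show ?case by simp
next
  case (Cons u ps)
  have "p' \<noteq> []" using Cons.prems(3) by auto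
  then obtain ps' where p': "p' = u # ps'" using Cons.prems(5) by (cases p') auto
  show ?case
  proof (cases "ps = []")
    case True
    show ?thesis
    proof (rule ccontr)
      assume "u # ps \<noteq> p'"
      then have ne: "ps' \<noteq> []" using True p' by auto
      have "distinct p'" using red_distinct[OF Cons.prems(3,4)] .
      then have nu: "u \<notin> set ps'" unfolding p' by simp
      have "last p' = u" using Cons.prems(6) True by simp
      moreover have "last p' = last ps'" unfolding p' using ne by simp
      ultimately have "last ps' = u" by simp
      moreover have "last ps' \<in> set ps'" using last_in_set[OF ne] .
      ultimately show False using nu by simp
    qed
  next
    case False
    show ?thesis
    proof (cases "ps' = []")
      case True
      have "distinct (u # ps)" using red_distinct[OF Cons.prems(1,2)] .
      then have nu: "u \<notin> set ps" by simp
      have "last p' = u" using p' True by simp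
      moreover have "last (u # ps) = last ps" using False by simp
      ultimately have "last ps = u" using Cons.prems(6) by simp
      moreover have "last ps \<in> set ps" using last_in_set[OF False] .
      ultimately have False using nu by simp
      then show ?thesis ..
    next
      case F2: False
      obtain x ps1 where ps: "ps = x # ps1" using False by (cases ps) auto
      obtain y ps2 where ps2: "ps' = y # ps2" using F2 by (cases ps') auto
      show ?thesis
      proof (cases "x = y")
        case True
        have h1: "is_walk E ps" using is_walk_Cons[OF Cons.prems(1) False] .
        have h2: "red ps" using red_Cons[OF Cons.prems(2)] .
        have "is_walk E (u # ps')" using Cons.prems(3) unfolding p' .
        then have h3: "is_walk E ps'" by (rule is_walk_Cons[OF _ F2])
        have "red (u # ps')" using Cons.prems(4) unfolding p' .
        then have h4: "red ps'" by (rule red_Cons)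
        have h5: "hd ps = hd ps'" using ps ps2 True by simp
        have "last ps = last (u # ps)" using False by simp
        also have "\<dots> = last p'" using Cons.prems(6) .
        also have "\<dots> = last ps'" unfolding p' using F2 by simp
        finally have h6: "last ps = last ps'" .
        have "ps = ps'" using Cons.IH[OF h1 h2 h3 h4 h5 h6] .
        then show ?thesis using p' by simp
      next
        case False
        define W where "W = rev ps1 @ x # u # y # ps2"
        have r1: "red (rev ps1 @ [x, u])"
        proof -
          have "red (rev (u # ps))" using red_rev[OF Cons.prems(2)] .
          moreover have "rev (u # ps) = rev ps1 @ [x, u]" using ps by simp
          ultimately show ?thesis by simp
        qed
        have r2: "red (u # y # ps2)" using Cons.prems(4) p' ps2 by simp
        have "red W" unfolding W_def using red_append[OF r1 r2 False] .
        moreover have "is_walk E W"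
        proof -
          have "is_walk E (rev (u # ps))" using is_walk_rev[OF E_sym Cons.prems(1)] .
          moreover have "rev (u # ps) = (rev ps1 @ [x]) @ [u]" using ps by simp
          ultimately have "is_walk E ((rev ps1 @ [x]) @ [u])" by simp
          moreover have "is_walk E (u # y # ps2)" using Cons.prems(3) p' ps2 by simp
          moreover have "W = (rev ps1 @ [x]) @ u # y # ps2" using W_def by simp
          ultimately show ?thesis using is_walk_append[of E "rev ps1 @ [x]" u "y # ps2"] by simp
        qed
        ultimately have "distinct W" using red_distinct by simp
        moreover have "length W \<ge> 2" using W_def by simp
        moreover have "hd W = last (u # ps)"
        proof -
          have "hd W = hd (rev (u # ps))" using W_def ps by (cases "rev ps1") auto
          then show ?thesis by (simp add: hd_rev)
        qed
        moreover have "last W = last p'" using W_def p' ps2 by simp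
        ultimately have "last (u # ps) \<noteq> last p'" using distinct_hd_last[of W] by simp
        then show ?thesis using Cons.prems(6) by simp
      qed
    qed
  qed
qed

lemma reduce:
  "is_walk E p \<Longrightarrow> \<exists>q. is_walk E q \<and> red q \<and> hd q = hd p \<and> last q = last p \<and>
     walk_weight len q \<le> walk_weight len p \<and> edges q \<subseteq> edges p"
proof (induction "length p" arbitrary: p rule: less_induct)
  case less
  show ?case
  proof (cases "red p")
    case True then show ?thesis using less.prems by blast
  next
    case False
    then obtain xs a b ys where p: "p = xs @ a # b # a # ys" using not_red_split by blast
    define p' where "p' = xs @ a # ys"
    have "is_walk E (xs @ a # b # a # ys)" using less.prems p by simp
    then have w1: "is_walk E (xs @ [a])" and w2: "is_walk E (a # b # a # ys)"
      using is_walk_append[of E xs a "b # a # ys"] by simp_all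
    then have w3: "is_walk E (a # ys)" and eab: "E a b" by simp_all
    have "is_walk E p'" unfolding p'_def using w1 w3 is_walk_append[of E xs a ys] by simp
    moreover have "length p' < length p" using p p'_def by simp
    ultimately obtain q where q: "is_walk E q \<and> red q \<and> hd q = hd p' \<and> last q = last p' \<and>
      walk_weight len q \<le> walk_weight len p' \<and> edges q \<subseteq> edges p'" using less.hyps by blast
    have "walk_weight len p = walk_weight len (xs @ [a]) + (len a b + (len b a + walk_weight len (a # ys)))"
      using p walk_weight_append[of len xs a "b # a # ys"] by simp
    moreover have "walk_weight len p' = walk_weight len (xs @ [a]) + walk_weight len (a # ys)"
      using p'_def walk_weight_append[of len xs a ys] by simp
    moreover have "len a b > 0" "len b a > 0" using len_pos eab E_sym by auto
    ultimately have "walk_weight len p' \<le> walk_weight len p" by simp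
    moreover have "edges p' \<subseteq> edges p"
    proof -
      have "edges p = edges (xs @ [a]) \<union> edges (a # b # a # ys)"
        using p edges_append[of xs a "b # a # ys"] by simp
      moreover have "edges p' = edges (xs @ [a]) \<union> edges (a # ys)"
        using p'_def edges_append[of xs a ys] by simp
      moreover have "edges (a # ys) \<subseteq> edges (a # b # a # ys)" by auto
      ultimately show ?thesis by blast
    qed
    moreover have "hd p' = hd p" using p p'_def by (cases xs) auto
    moreover have "last p' = last p" using p p'_def by simp
    ultimately show ?thesis using q by (metis order.trans)
  qed
qed

lemma walks_bdd: "bdd_below {walk_weight len p | p. is_walk E p \<and> hd p = u \<and> last p = v}"
  by (rule bdd_belowI[of _ 0]) (auto intro: walk_weight_nonneg)

lemma dist_le_walk: "is_walk E p \<Longrightarrow> d (hd p) (last p) \<le> walk_weight len p"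
  unfolding tree_dist_def by (rule cInf_lower[OF _ walks_bdd]) blast

lemma dist_red: "is_walk E q \<Longrightarrow> red q \<Longrightarrow> d (hd q) (last q) = walk_weight len q"
  unfolding tree_dist_def
proof (rule cInf_eq_minimum)
  assume q: "is_walk E q" "red q"
  show "walk_weight len q \<in> {walk_weight len p |p. is_walk E p \<and> hd p = hd q \<and> last p = last q}"
    using q by blast
  fix x assume "x \<in> {walk_weight len p |p. is_walk E p \<and> hd p = hd q \<and> last p = last q}"
  then obtain p where p: "x = walk_weight len p" "is_walk E p" "hd p = hd q" "last p = last q" by blast
  then obtain q' where q': "is_walk E q' \<and> red q' \<and> hd q' = hd p \<and> last q' = last p \<and>
     walk_weight len q' \<le> walk_weight len p" using reduce by blast
  then have "q' = q" using red_unique[of q' q] q p by simp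
  then show "walk_weight len q \<le> x" using q' p by simp
qed

lemma red_exists: "u \<in> V \<Longrightarrow> v \<in> V \<Longrightarrow> \<exists>q. is_walk E q \<and> red q \<and> hd q = u \<and> last q = v"
proof -
  assume "u \<in> V" "v \<in> V"
  then obtain p where p: "is_walk E p" "hd p = u" "last p = v" using conn by blast
  then obtain q where "is_walk E q \<and> red q \<and> hd q = hd p \<and> last q = last p" using reduce by blast
  then show ?thesis using p by auto
qed

lemma dist_nonneg: "u \<in> V \<Longrightarrow> v \<in> V \<Longrightarrow> 0 \<le> d u v"
proof -
  assume "u \<in> V" "v \<in> V"
  then obtain q where q: "is_walk E q" "red q" "hd q = u" "last q = v" using red_exists by blast
  have "d (hd q) (last q) = walk_weight len q" using dist_red q by blast
  then show ?thesis using q walk_weight_nonneg by simp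
qed

lemma dist_self: "d u u = 0"
proof -
  have "d (hd [u]) (last [u]) = walk_weight len [u]" by (rule dist_red) auto
  then show ?thesis by simp
qed

lemma dist_le_len: "E u v \<Longrightarrow> d u v \<le> len u v"
  using dist_le_walk[of "[u, v]"] by simp

lemma walk_weight_rev: "is_walk E p \<Longrightarrow> walk_weight len (rev p) = walk_weight len p"
proof (induction p rule: edges.induct)
  case (1 a b xs)
  have "rev (a # b # xs) = rev xs @ b # [a]" by simp
  then have "walk_weight len (rev (a # b # xs)) = walk_weight len (rev xs @ [b]) + len b a"
    using walk_weight_append[of len "rev xs" b "[a]"] by simp
  also have "\<dots> = walk_weight len (b # xs) + len a b" using 1 len_sym[of a b] by simp
  finally show ?case by simp
qed auto

lemma dist_sym: "u \<in> V \<Longrightarrow> v \<in> V \<Longrightarrow> d u v = d v u"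
proof -
  assume uv: "u \<in> V" "v \<in> V"
  obtain q where q: "is_walk E q" "red q" "hd q = u" "last q = v" using red_exists uv by blast
  have "d (hd (rev q)) (last (rev q)) = walk_weight len (rev q)"
    by (rule dist_red) (use q is_walk_rev[OF E_sym] red_rev in auto)
  moreover have "q \<noteq> []" using q by auto
  ultimately have "d v u = walk_weight len q" using q walk_weight_rev[OF q(1)] by (simp add: hd_rev last_rev)
  moreover have "d u v = walk_weight len q" using dist_red[OF q(1,2)] q by simp
  ultimately show ?thesis by simp
qed

lemma dist_tri: "u \<in> V \<Longrightarrow> v \<in> V \<Longrightarrow> w \<in> V \<Longrightarrow> d u w \<le> d u v + d v w"
proof -
  assume uvw: "u \<in> V" "v \<in> V" "w \<in> V"
  obtain q1 where q1: "is_walk E q1" "red q1" "hd q1 = u" "last q1 = v" using red_exists uvw by blast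
  obtain q2 where q2: "is_walk E q2" "red q2" "hd q2 = v" "last q2 = w" using red_exists uvw by blast
  have "q1 \<noteq> []" using q1(1) by auto
  then have "q1 = butlast q1 @ [v]" using q1(4) append_butlast_last_id[of q1] by simp
  then obtain xs where xs: "q1 = xs @ [v]" by blast
  have "q2 \<noteq> []" using q2(1) by auto
  then obtain ys where ys: "q2 = v # ys" using q2(3) by (cases q2) auto
  have W: "is_walk E (xs @ v # ys)" using is_walk_append[of E xs v ys] q1(1) q2(1) xs ys by simp
  have "d (hd (xs @ v # ys)) (last (xs @ v # ys)) \<le> walk_weight len (xs @ v # ys)"
    by (rule dist_le_walk[OF W])
  moreover have "hd (xs @ v # ys) = u" using q1 xs by (cases xs) auto
  moreover have "last (xs @ v # ys) = w" using q2 ys by simp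
  moreover have "walk_weight len (xs @ v # ys) = d u v + d v w"
  proof -
    have "walk_weight len (xs @ v # ys) = walk_weight len q1 + walk_weight len q2"
      using walk_weight_append[of len xs v ys] xs ys by simp
    also have "\<dots> = d u v + d v w" using dist_red[OF q1(1,2)] dist_red[OF q2(1,2)] q1 q2 by simp
    finally show ?thesis .
  qed
  ultimately show ?thesis by simp
qed

lemma dist_iso: "g \<in> carrier G \<Longrightarrow> u \<in> V \<Longrightarrow> v \<in> V \<Longrightarrow> d (\<phi> g u) (\<phi> g v) = d u v"
proof -
  assume g: "g \<in> carrier G" and uv: "u \<in> V" "v \<in> V"
  obtain q where q: "is_walk E q" "red q" "hd q = u" "last q = v" using red_exists uv by blast
  have sq: "set q \<subseteq> V" using walk_V q uv by blast
  have w: "is_walk E (map (\<phi> g) q)" by (rule is_walk_map[OF q(1)], rule act_E[OF g])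
  have r: "red (map (\<phi> g) q)" using red_map q act_inj[OF g] sq inj_on_subset by blast
  have "q \<noteq> []" using q by auto
  then have "hd (map (\<phi> g) q) = \<phi> g u" "last (map (\<phi> g) q) = \<phi> g v" using q by (auto simp: hd_map last_map)
  then have "d (\<phi> g u) (\<phi> g v) = walk_weight len (map (\<phi> g) q)" using dist_red[OF w r] by simp
  also have "\<dots> = walk_weight len q" by (rule walk_weight_map[OF q(1)], rule act_len[OF g])
  finally show ?thesis using dist_red[OF q(1,2)] q by simp
qed

end



lemma two_split1: "2 \<le> length xs \<Longrightarrow> xs = xs ! 0 # xs ! 1 # drop 2 xs"
  by (cases xs; cases "tl xs") auto

lemma two_split2: "2 \<le> length xs \<Longrightarrow> xs = take (length xs - 2) xs @ [xs ! (length xs - 2), xs ! (length xs - 1)]"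
proof -
  assume a: "2 \<le> length xs"
  have "xs = take (length xs - 2) xs @ drop (length xs - 2) xs" by simp
  moreover have "drop (length xs - 2) xs = [xs ! (length xs - 2), xs ! (length xs - 1)]"
  proof -
    have l: "length (drop (length xs - 2) xs) = 2" using a by simp
    then have "drop (length xs - 2) xs = drop (length xs - 2) xs ! 0 # drop (length xs - 2) xs ! 1 # []"
      using two_split1[of "drop (length xs - 2) xs"] by simp
    moreover have "drop (length xs - 2) xs ! 0 = xs ! (length xs - 2)" using a by simp
    moreover have "drop (length xs - 2) xs ! 1 = xs ! (length xs - 1)" using a
      by (simp add: nth_drop) (metis Suc_diff_Suc a diff_Suc_1 numeral_2_eq_2 less_le_trans lessI
          plus_1_eq_Suc zero_less_numeral)
    ultimately show ?thesis by simp
  qed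
  ultimately show ?thesis by simp
qed

context gtree begin

lemma grpG: "group G" by (rule grp)

lemma pow_closed: "h \<in> carrier G \<Longrightarrow> h [^]\<^bsub>G\<^esub> (n::nat) \<in> carrier G"
  by (rule monoid.nat_pow_closed[OF group.is_monoid[OF grp]])

lemma act_pow_Suc: "h \<in> carrier G \<Longrightarrow> v \<in> V \<Longrightarrow>
   \<phi> (h [^]\<^bsub>G\<^esub> Suc n) v = \<phi> (h [^]\<^bsub>G\<^esub> n) (\<phi> h v)"
proof -
  assume h: "h \<in> carrier G" and v: "v \<in> V"
  have "h [^]\<^bsub>G\<^esub> Suc n = h [^]\<^bsub>G\<^esub> n \<otimes>\<^bsub>G\<^esub> h"
    by (rule monoid.nat_pow_Suc[OF group.is_monoid[OF grp]])
  then show ?thesis using act_mult[OF pow_closed[OF h] h v] by simp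
qed

lemma act_pow_0: "v \<in> V \<Longrightarrow> \<phi> (h [^]\<^bsub>G\<^esub> (0::nat)) v = v"
  using act_one monoid.nat_pow_0[OF group.is_monoid[OF grp]] by simp

lemma act_pow_1: "h \<in> carrier G \<Longrightarrow> v \<in> V \<Longrightarrow> \<phi> (h [^]\<^bsub>G\<^esub> (1::nat)) v = \<phi> h v"
  using act_pow_Suc[of h v 0] act_pow_0 act_V by simp

definition tln where "tln h = trans_length V E len \<phi> h"

lemma tl_bdd: "h \<in> carrier G \<Longrightarrow> bdd_below ((\<lambda>v. d v (\<phi> h v)) ` V)"
  by (rule bdd_belowI2[of _ 0]) (simp add: dist_nonneg act_V)

lemma tl_le: "h \<in> carrier G \<Longrightarrow> v \<in> V \<Longrightarrow> tln h \<le> d v (\<phi> h v)"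
  unfolding tln_def trans_length_def by (rule cINF_lower[OF tl_bdd])

lemma tl_greatest: assumes "\<And>v. v \<in> V \<Longrightarrow> m \<le> d v (\<phi> h v)" shows "m \<le> tln h"
  unfolding tln_def trans_length_def by (rule cINF_greatest[OF V_ne assms])

lemma tl_nonneg: "h \<in> carrier G \<Longrightarrow> 0 \<le> tln h"
  by (rule tl_greatest) (simp add: dist_nonneg act_V)

lemma dist_pow: "h \<in> carrier G \<Longrightarrow> v \<in> V \<Longrightarrow> d v (\<phi> (h [^]\<^bsub>G\<^esub> n) v) \<le> real n * d v (\<phi> h v)"
proof (induction n)
  case 0
  then show ?case using act_pow_0 dist_self by simp
next
  case (Suc n)
  have hv: "\<phi> h v \<in> V" using act_V Suc.prems by blast
  have hn: "h [^]\<^bsub>G\<^esub> n \<in> carrier G" using pow_closed Suc.prems by blast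
  have "d v (\<phi> (h [^]\<^bsub>G\<^esub> Suc n) v) = d v (\<phi> (h [^]\<^bsub>G\<^esub> n) (\<phi> h v))"
    using act_pow_Suc Suc.prems by simp
  also have "\<dots> \<le> d v (\<phi> (h [^]\<^bsub>G\<^esub> n) v) + d (\<phi> (h [^]\<^bsub>G\<^esub> n) v) (\<phi> (h [^]\<^bsub>G\<^esub> n) (\<phi> h v))"
    by (rule dist_tri) (use Suc.prems hv hn act_V in auto)
  also have "d (\<phi> (h [^]\<^bsub>G\<^esub> n) v) (\<phi> (h [^]\<^bsub>G\<^esub> n) (\<phi> h v)) = d v (\<phi> h v)"
    using dist_iso[OF hn Suc.prems(2) hv] .
  finally show ?case using Suc by (simp add: algebra_simps)
qed

lemma stab_subgroup: "A \<subseteq> V \<Longrightarrow> subgroup {k \<in> carrier G. \<phi> k ` A = A} G"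
proof -
  assume A: "A \<subseteq> V"
  have img_mult: "\<phi> (k \<otimes>\<^bsub>G\<^esub> l) ` A = \<phi> k ` (\<phi> l ` A)" if "k \<in> carrier G" "l \<in> carrier G" for k l
    using act_mult[OF that] A by (auto simp: image_iff) (metis subsetD)+
  show ?thesis
  proof (rule group.subgroupI[OF grp])
    show "{k \<in> carrier G. \<phi> k ` A = A} \<subseteq> carrier G" by blast
    have "\<phi> \<one>\<^bsub>G\<^esub> ` A = A" using act_one A by (auto simp: image_iff) (metis subsetD)+
    then show "{k \<in> carrier G. \<phi> k ` A = A} \<noteq> {}" using monoid.one_closed[OF group.is_monoid[OF grp]] by blast
  next
    fix k assume k: "k \<in> {k \<in> carrier G. \<phi> k ` A = A}"
    then have kc: "k \<in> carrier G" and kA: "\<phi> k ` A = A" by auto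
    have ic: "inv\<^bsub>G\<^esub> k \<in> carrier G" using group.inv_closed[OF grp kc] .
    have "\<phi> (inv\<^bsub>G\<^esub> k) ` (\<phi> k ` A) = A"
      using act_inv1[OF kc] A by (auto simp: image_iff) (metis subsetD)+
    then show "inv\<^bsub>G\<^esub> k \<in> {k \<in> carrier G. \<phi> k ` A = A}" using kA ic by simp
  next
    fix k l assume "k \<in> {k \<in> carrier G. \<phi> k ` A = A}" "l \<in> {k \<in> carrier G. \<phi> k ` A = A}"
    then show "k \<otimes>\<^bsub>G\<^esub> l \<in> {k \<in> carrier G. \<phi> k ` A = A}"
      using img_mult monoid.m_closed[OF group.is_monoid[OF grp]] by auto
  qed
qed

lemma chain_walk:
  assumes h: "h \<in> carrier G" and w: "is_walk E \<sigma>" and r: "red \<sigma>"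
    and s1: "\<sigma> = a # c # \<sigma>1" and s2: "\<sigma> = \<sigma>0 @ [p0, \<phi> h a]" and a: "a \<in> V"
    and ne: "p0 \<noteq> \<phi> h c"
  shows "d a (\<phi> (h [^]\<^bsub>G\<^esub> n) a) = real n * walk_weight len \<sigma>"
proof -
  have sV: "set \<sigma> \<subseteq> V" using walk_V[OF w] s1 a by simp
  have "c \<in> set \<sigma>" using s1 by simp
  then have cV: "c \<in> V" using sV by blast
  have "p0 \<in> set \<sigma>" unfolding s2 by simp
  then have p0V: "p0 \<in> V" using sV by blast
  define g where "g = (\<lambda>n::nat. h [^]\<^bsub>G\<^esub> n)"
  have gc: "g n \<in> carrier G" for n using pow_closed h g_def by blast
  define W where "W = rec_nat [a] (\<lambda>n Wn. butlast Wn @ map (\<phi> (g n)) \<sigma>)"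
  have W0: "W 0 = [a]" and WS: "W (Suc n) = butlast (W n) @ map (\<phi> (g n)) \<sigma>" for n
    unfolding W_def by simp_all
  have tau_walk: "is_walk E (map (\<phi> (g n)) \<sigma>)" for n
    by (rule is_walk_map[OF w], rule act_E[OF gc])
  have tau_red: "red (map (\<phi> (g n)) \<sigma>)" for n
    using red_map[OF r] act_inj[OF gc] sV inj_on_subset by blast
  have tau_wt: "walk_weight len (map (\<phi> (g n)) \<sigma>) = walk_weight len \<sigma>" for n
    by (rule walk_weight_map[OF w], rule act_len[OF gc])
  have tau_hd: "map (\<phi> (g n)) \<sigma> = \<phi> (g n) a # \<phi> (g n) c # map (\<phi> (g n)) \<sigma>1" for n
    using s1 by simp
  have tau_last: "map (\<phi> (g n)) \<sigma> = map (\<phi> (g n)) \<sigma>0 @ [\<phi> (g n) p0, \<phi> (g (Suc n)) a]" for n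
    using s2 act_pow_Suc[OF h a] g_def by simp
  have main: "is_walk E (W n) \<and> red (W n) \<and> hd (W n) = a \<and> last (W n) = \<phi> (g n) a \<and>
      walk_weight len (W n) = real n * walk_weight len \<sigma> \<and>
      (0 < n \<longrightarrow> (\<exists>xs. W n = xs @ [\<phi> (g (n - 1)) p0, \<phi> (g n) a]))" for n
  proof (induction n)
    case 0
    then show ?case using W0 g_def act_pow_0[OF a] by simp
  next
    case (Suc n)
    have IH: "is_walk E (W n)" "red (W n)" "hd (W n) = a" "last (W n) = \<phi> (g n) a"
      "walk_weight len (W n) = real n * walk_weight len \<sigma>"
      "0 < n \<longrightarrow> (\<exists>xs. W n = xs @ [\<phi> (g (n - 1)) p0, \<phi> (g n) a])" using Suc.IH by blast+
    have Wne: "W n \<noteq> []" using IH(1) by auto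
    define B where "B = butlast (W n)"
    have WnB: "W n = B @ [\<phi> (g n) a]" using Wne IH(4) B_def append_butlast_last_id[of "W n"] by simp
    define T where "T = \<phi> (g n) c # map (\<phi> (g n)) \<sigma>1"
    have WS': "W (Suc n) = B @ \<phi> (g n) a # T" using WS B_def tau_hd T_def by simp
    have walk: "is_walk E (W (Suc n))"
    proof -
      have "is_walk E (\<phi> (g n) a # T)" using tau_walk[of n] tau_hd[of n] T_def by simp
      moreover have "is_walk E (B @ [\<phi> (g n) a])" using IH(1) WnB by simp
      ultimately show ?thesis using WS' is_walk_append[of E B "\<phi> (g n) a" T] by simp
    qed
    have wt: "walk_weight len (W (Suc n)) = real (Suc n) * walk_weight len \<sigma>"
    proof -
      have "walk_weight len (W (Suc n)) = walk_weight len (B @ [\<phi> (g n) a]) + walk_weight len (\<phi> (g n) a # T)"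
        using WS' walk_weight_append[of len B "\<phi> (g n) a" T] by simp
      also have "\<dots> = walk_weight len (W n) + walk_weight len \<sigma>"
        using WnB tau_wt[of n] tau_hd[of n] T_def by simp
      finally show ?thesis using IH(5) by (simp add: algebra_simps)
    qed
    have hdW: "hd (W (Suc n)) = a"
    proof (cases B)
      case Nil then show ?thesis using WnB IH(3) WS' by simp
    next
      case (Cons b B') then show ?thesis using WnB IH(3) WS' by simp
    qed
    have lastW: "last (W (Suc n)) = \<phi> (g (Suc n)) a"
      using WS tau_last[of n] by simp
    have two: "\<exists>xs. W (Suc n) = xs @ [\<phi> (g (Suc n - 1)) p0, \<phi> (g (Suc n)) a]"
      using WS tau_last[of n] by (intro exI[of _ "B @ map (\<phi> (g n)) \<sigma>0"]) (simp add: B_def)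
    have redW: "red (W (Suc n))"
    proof (cases n)
      case 0
      have "W (Suc n) = map (\<phi> (g 0)) \<sigma>" using WS W0 0 by simp
      also have "\<dots> = \<sigma>" using act_pow_0 sV g_def by (simp add: map_idI subsetD)
      finally show ?thesis using r by simp
    next
      case (Suc m)
      obtain xs where xs: "W n = xs @ [\<phi> (g m) p0, \<phi> (g n) a]" using IH(6) Suc by auto
      have "W (Suc n) = xs @ \<phi> (g m) p0 # \<phi> (g n) a # \<phi> (g n) c # map (\<phi> (g n)) \<sigma>1"
        using WS' T_def WnB xs by simp
      moreover have "red (xs @ [\<phi> (g m) p0, \<phi> (g n) a])" using IH(2) xs by simp
      moreover have "red (\<phi> (g n) a # \<phi> (g n) c # map (\<phi> (g n)) \<sigma>1)" using tau_red[of n] tau_hd[of n] by simp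
      moreover have "\<phi> (g m) p0 \<noteq> \<phi> (g n) c"
      proof
        assume eq: "\<phi> (g m) p0 = \<phi> (g n) c"
        have "\<phi> (g n) c = \<phi> (g m) (\<phi> h c)" using act_pow_Suc[OF h cV] Suc g_def by simp
        then have "\<phi> (g m) p0 = \<phi> (g m) (\<phi> h c)" using eq by simp
        moreover have "\<phi> h c \<in> V" using act_V h cV by blast
        ultimately have "p0 = \<phi> h c" using act_inj[OF gc] p0V by (meson inj_onD)
        then show False using ne by simp
      qed
      ultimately show ?thesis using red_append by simp
    qed
    show ?case using walk redW hdW lastW wt two by blast
  qed
  then have "d (hd (W n)) (last (W n)) = walk_weight len (W n)" using dist_red by blast
  then show ?thesis using main g_def by simp
qed

end



context gtree begin

lemma axis:
  assumes h: "h \<in> carrier G"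
  shows "(\<exists>v\<in>V. \<phi> h v = v) \<or> (\<exists>u v. E u v \<and> \<phi> h u = v \<and> \<phi> h v = u) \<or>
         (\<exists>a\<in>V. \<forall>n. real n * d a (\<phi> h a) \<le> d a (\<phi> (h [^]\<^bsub>G\<^esub> n) a))"
proof -
  obtain w where wV: "w \<in> V" using V_ne by blast
  have hwV: "\<phi> h w \<in> V" using act_V h wV by blast
  obtain q where q: "is_walk E q" "red q" "hd q = w" "last q = \<phi> h w" using red_exists wV hwV by blast
  have qne: "q \<noteq> []" using q(1) by auto
  define L where "L = length q - 1"
  have lq: "length q = Suc L" using qne L_def by (cases q) auto
  have q0: "q ! 0 = w" using q(3) qne by (simp add: hd_conv_nth)
  have qL: "q ! L = \<phi> h w" using q(4) qne lq by (simp add: last_conv_nth)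
  have sq: "set q \<subseteq> V" using walk_V[OF q(1)] q(3) wV by simp
  have qV: "i \<le> L \<Longrightarrow> q ! i \<in> V" for i using sq lq by (simp add: subsetD)
  show ?thesis
  proof (cases "L = 0")
    case True
    then have "\<phi> h w = w" using q0 qL by simp
    then show ?thesis using wV by blast
  next
    case Lpos: False
    define P where "P i \<longleftrightarrow> \<phi> h (q ! i) = q ! (L - i)" for i
    define k where "k = (LEAST j. j = L \<or> \<not> P (Suc j))"
    have kL: "k \<le> L" unfolding k_def by (rule Least_le) simp
    have Qk: "k = L \<or> \<not> P (Suc k)" unfolding k_def by (rule LeastI[of _ L]) simp
    have Pk: "i \<le> k \<Longrightarrow> P i" for i
    proof (induction i)
      case 0 then show ?case using q0 qL P_def by simp
    next
      case (Suc i)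
      then have "i < k" by simp
      then have "\<not> (i = L \<or> \<not> P (Suc i))" unfolding k_def by (rule not_less_Least)
      then show ?case by simp
    qed
    show ?thesis
    proof (cases "L \<le> 2 * k")
      case True
      show ?thesis
      proof (cases "even L")
        case True
        then obtain c where c: "L = 2 * c" by blast
        have "c \<le> k" using c \<open>L \<le> 2 * k\<close> by simp
        then have "P c" using Pk by blast
        then have "\<phi> h (q ! c) = q ! c" using c P_def by simp
        moreover have "q ! c \<in> V" using qV c by simp
        ultimately show ?thesis by blast
      next
        case False
        then obtain c where c: "L = 2 * c + 1" by (metis oddE)
        have "Suc c \<le> k" using c \<open>L \<le> 2 * k\<close> by simp
        then have "P c" "P (Suc c)" using Pk by auto
        then have "\<phi> h (q ! c) = q ! Suc c" "\<phi> h (q ! Suc c) = q ! c" using c P_def by simp_all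
        moreover have "E (q ! c) (q ! Suc c)" using is_walk_nth[OF q(1)] lq c by simp
        ultimately show ?thesis by blast
      qed
    next
      case False
      then have kL': "k < L" "2 * k < L" by simp_all
      then have nP: "\<not> P (Suc k)" using Qk by simp
      define a where "a = q ! k"
      define \<sigma> where "\<sigma> = drop k (take (L - k + 1) q)"
      have ls: "length \<sigma> = L - 2 * k + 1" using \<sigma>_def lq kL' by simp
      have sn: "i < length \<sigma> \<Longrightarrow> \<sigma> ! i = q ! (k + i)" for i
        using \<sigma>_def lq kL' by simp
      have ws: "is_walk E \<sigma>" unfolding \<sigma>_def
        by (rule is_walk_drop[OF is_walk_take[OF q(1)]]) (use lq kL' in auto)
      have rs: "red \<sigma>" unfolding \<sigma>_def by (rule red_drop[OF red_take[OF q(2)]])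
      have l2: "2 \<le> length \<sigma>" using ls kL' by simp
      have "0 < length \<sigma>" using l2 by linarith
      then have "\<sigma> ! 0 = a" using sn[of 0] a_def by simp
      moreover have "\<sigma> ! 1 = q ! Suc k" using sn[of 1] l2 by simp
      ultimately have s1: "\<sigma> = a # q ! Suc k # drop 2 \<sigma>"
        using two_split1[OF l2] by simp
      have "\<sigma> ! (length \<sigma> - 1) = q ! (L - k)" using sn[of "length \<sigma> - 1"] ls kL' by simp
      also have "\<dots> = \<phi> h a" using Pk[of k] P_def a_def by simp
      finally have last1: "\<sigma> ! (length \<sigma> - 1) = \<phi> h a" .
      have p0: "\<sigma> ! (length \<sigma> - 2) = q ! (L - Suc k)" using sn[of "length \<sigma> - 2"] ls kL' by simp
      have s2: "\<sigma> = take (length \<sigma> - 2) \<sigma> @ [q ! (L - Suc k), \<phi> h a]"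
        using two_split2[OF l2] p0 last1 by simp
      have ne: "q ! (L - Suc k) \<noteq> \<phi> h (q ! Suc k)" using nP P_def by simp
      have aV: "a \<in> V" using qV kL a_def by simp
      have eq: "d a (\<phi> (h [^]\<^bsub>G\<^esub> n) a) = real n * walk_weight len \<sigma>" for n
        by (rule chain_walk[OF h ws rs s1 s2 aV ne])
      have "d a (\<phi> h a) \<le> walk_weight len \<sigma>"
      proof -
        have "hd \<sigma> = a" using s1 by (metis list.sel(1))
        moreover have "\<sigma> \<noteq> []" using l2 by (cases \<sigma>) auto
        then have "last \<sigma> = \<phi> h a" using last1 by (simp add: last_conv_nth)
        ultimately show ?thesis using dist_le_walk[OF ws] by simp
      qed
      then have "\<forall>n. real n * d a (\<phi> h a) \<le> d a (\<phi> (h [^]\<^bsub>G\<^esub> n) a)"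
        using eq by (simp add: mult_left_mono)
      then show ?thesis using aV by blast
    qed
  qed
qed

end



lemma finite_bound:
  fixes Q :: "'a \<Rightarrow> real \<Rightarrow> bool"
  assumes "finite A" and ex: "\<And>x. x \<in> A \<Longrightarrow> \<exists>D. Q x D"
    and mono: "\<And>x D D'. Q x D \<Longrightarrow> D \<le> D' \<Longrightarrow> Q x D'"
  shows "\<exists>D. \<forall>x\<in>A. Q x D"
  using assms(1) ex
proof (induction A rule: finite_induct)
  case empty then show ?case by simp
next
  case (insert x A)
  obtain D1 where D1: "\<forall>y\<in>A. Q y D1" using insert by blast
  obtain D2 where D2: "Q x D2" using insert by blast
  have "\<forall>y\<in>insert x A. Q y (max D1 D2)"
    using D1 D2 mono by (metis insert_iff max.cobounded1 max.cobounded2)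
  then show ?case by blast
qed

lemma finite_edges: "finite (edges p)"
  by (induction p rule: edges.induct) auto

context gtree begin

lemma ell_bound:
  assumes "elliptic V E \<phi> K" "K \<subseteq> carrier G"
  shows "\<exists>w\<in>V. \<exists>l\<ge>0. \<forall>k\<in>K. d w (\<phi> k w) \<le> l"
  using assms(1) unfolding elliptic_def
proof
  assume "\<exists>v\<in>V. \<forall>k\<in>K. \<phi> k v = v"
  then obtain v where "v \<in> V" "\<forall>k\<in>K. \<phi> k v = v" by blast
  then show ?thesis using dist_self by (intro bexI[of _ v] exI[of _ 0]) auto
next
  assume "\<exists>u v. E u v \<and> (\<forall>k\<in>K. \<phi> k ` {u, v} = {u, v})"
  then obtain u v where uv: "E u v" "\<forall>k\<in>K. \<phi> k ` {u, v} = {u, v}" by blast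
  have "\<forall>k\<in>K. d u (\<phi> k u) \<le> len u v"
  proof
    fix k assume "k \<in> K"
    then have "\<phi> k u \<in> {u, v}" using uv by blast
    then show "d u (\<phi> k u) \<le> len u v"
      using dist_self dist_le_len[OF uv(1)] len_pos[OF uv(1)] by auto
  qed
  moreover have "u \<in> V" using E_V uv by blast
  moreover have "0 \<le> len u v" using len_pos uv by (simp add: less_imp_le)
  ultimately show ?thesis by blast
qed

lemma weight_lower:
  "is_walk E q \<Longrightarrow> (\<forall>(x, x') \<in> edges q. l \<le> len x x') \<Longrightarrow> real (length q - 1) * l \<le> walk_weight len q"
proof (induction q rule: edges.induct)
  case (1 a b xs)
  have "real (length (b # xs) - 1) * l \<le> walk_weight len (b # xs)" using 1 by auto
  moreover have "l \<le> len a b" using 1 by auto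
  ultimately show ?case by (simp add: algebra_simps)
qed auto

end

locale twotrees =
  T1: gtree G V1 E1 len1 \<phi>1 + T2: gtree G V2 E2 len2 \<phi>2
  for G :: "('g, 'b) monoid_scheme" and V1 :: "'v set" and E1 len1 \<phi>1
    and V2 :: "'w set" and E2 len2 \<phi>2 +
  fixes Hs :: "'g set list" and S :: "'g set"
  assumes finS: "finite S" and SG: "S \<subseteq> carrier G" and genS: "generate G S = carrier G"
    and perip: "peripheral_structure G Hs"
    and hyp1: "\<forall>K. subgroup K G \<longrightarrow> (elliptic V1 E1 \<phi>1 K \<longleftrightarrow>
            (\<exists>i<length Hs. \<exists>x\<in>carrier G. K \<subseteq> conjugate G x (Hs ! i)))"
    and hyp2: "\<forall>K. subgroup K G \<longrightarrow> (elliptic V2 E2 \<phi>2 K \<longleftrightarrow>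
            (\<exists>i<length Hs. \<exists>x\<in>carrier G. K \<subseteq> conjugate G x (Hs ! i)))"
begin

lemma ell12: "subgroup K G \<Longrightarrow> elliptic V1 E1 \<phi>1 K \<Longrightarrow> elliptic V2 E2 \<phi>2 K"
  using hyp1 hyp2 by blast

lemma quasi_fix: "c \<in> V1 \<Longrightarrow> \<exists>w\<in>V2. \<exists>l\<ge>0. \<forall>s\<in>carrier G. \<phi>1 s c = c \<longrightarrow> T2.d w (\<phi>2 s w) \<le> l"
proof -
  assume c: "c \<in> V1"
  define K where "K = {k \<in> carrier G. \<phi>1 k ` {c} = {c}}"
  have sg: "subgroup K G" unfolding K_def by (rule T1.stab_subgroup) (use c in simp)
  have "elliptic V1 E1 \<phi>1 K" unfolding elliptic_def K_def using c by auto
  then have "elliptic V2 E2 \<phi>2 K" using ell12 sg by blast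
  then obtain w l where w: "w \<in> V2" "l \<ge> 0" "\<forall>k\<in>K. T2.d w (\<phi>2 k w) \<le> l"
    using T2.ell_bound K_def by blast
  have "\<forall>s\<in>carrier G. \<phi>1 s c = c \<longrightarrow> s \<in> K" unfolding K_def by auto
  then show ?thesis using w by blast
qed

end



context twotrees begin

definition good :: "'v set \<Rightarrow> ('v \<times> 'v) set \<Rightarrow> 'v list \<Rightarrow> bool" where
  "good VF EF p \<longleftrightarrow> (\<forall>(x, x') \<in> edges p. \<exists>z\<in>carrier G. \<exists>(b, b') \<in> EF. x = \<phi>1 z b \<and> x' = \<phi>1 z b')"

lemma walk_bound:
  assumes EF: "EF \<subseteq> VF \<times> VF" and VF: "VF \<subseteq> V1" and f: "\<forall>c\<in>VF. f c \<in> V2"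
    and rel: "\<forall>b\<in>VF. \<forall>c\<in>VF. \<forall>z\<in>carrier G. \<forall>z'\<in>carrier G. \<phi>1 z b = \<phi>1 z' c \<longrightarrow>
        T2.d (\<phi>2 z (f b)) (\<phi>2 z' (f c)) \<le> D"
    and eb: "\<forall>(b, b') \<in> EF. T2.d (f b) (f b') \<le> D"
  shows "q \<noteq> [] \<Longrightarrow> good VF EF q \<Longrightarrow> z \<in> carrier G \<Longrightarrow> z' \<in> carrier G \<Longrightarrow> b \<in> VF \<Longrightarrow> b' \<in> VF \<Longrightarrow>
     hd q = \<phi>1 z b \<Longrightarrow> last q = \<phi>1 z' b' \<Longrightarrow>
     T2.d (\<phi>2 z (f b)) (\<phi>2 z' (f b')) \<le> D * (2 * real (length q - 1) + 1)"
proof (induction q arbitrary: z b rule: edges.induct)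
  case (1 x x' rest)
  have "(x, x') \<in> edges (x # x' # rest)" by simp
  then obtain z1 c c' where z1: "z1 \<in> carrier G" "(c, c') \<in> EF" "x = \<phi>1 z1 c" "x' = \<phi>1 z1 c'"
    using 1(3) unfolding good_def by blast
  have cc: "c \<in> VF" "c' \<in> VF" using z1(2) EF by auto
  have g2: "good VF EF (x' # rest)" using 1(3) unfolding good_def by auto
  have IH: "T2.d (\<phi>2 z1 (f c')) (\<phi>2 z' (f b')) \<le> D * (2 * real (length (x' # rest) - 1) + 1)"
    using 1(1)[OF _ g2 z1(1) 1(5) cc(2) 1(7)] 1(9) z1(4) by simp
  have p1: "\<phi>2 z (f b) \<in> V2" using T2.act_V 1(4) f 1(6) by blast
  have p2: "\<phi>2 z1 (f c) \<in> V2" using T2.act_V z1(1) f cc by blast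
  have p3: "\<phi>2 z1 (f c') \<in> V2" using T2.act_V z1(1) f cc by blast
  have p4: "\<phi>2 z' (f b') \<in> V2" using T2.act_V 1(5) f 1(7) by blast
  have s1: "T2.d (\<phi>2 z (f b)) (\<phi>2 z1 (f c)) \<le> D"
    using rel 1(6) cc(1) 1(4) z1(1) 1(8) z1(3) by simp
  have s2: "T2.d (\<phi>2 z1 (f c)) (\<phi>2 z1 (f c')) \<le> D"
    using T2.dist_iso[OF z1(1)] f cc eb z1(2) by auto
  have "T2.d (\<phi>2 z (f b)) (\<phi>2 z' (f b')) \<le>
      T2.d (\<phi>2 z (f b)) (\<phi>2 z1 (f c)) + T2.d (\<phi>2 z1 (f c)) (\<phi>2 z' (f b'))"
    using T2.dist_tri p1 p2 p4 by blast
  also have "T2.d (\<phi>2 z1 (f c)) (\<phi>2 z' (f b')) \<le>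
      T2.d (\<phi>2 z1 (f c)) (\<phi>2 z1 (f c')) + T2.d (\<phi>2 z1 (f c')) (\<phi>2 z' (f b'))"
    using T2.dist_tri p2 p3 p4 by blast
  finally show ?case using s1 s2 IH by (simp add: algebra_simps)
next
  case ("2_2" x)
  then have "\<phi>1 z b = \<phi>1 z' b'" by simp
  then show ?case using rel "2_2" by simp
next
  case "2_1" then show ?case by simp
qed

end



context twotrees begin

lemma gen_walk:
  assumes v0: "v0 \<in> V1"
    and r: "\<forall>s\<in>S. is_walk E1 (r s) \<and> red (r s) \<and> hd (r s) = v0 \<and> last (r s) = \<phi>1 s v0"
    and EF: "EF = (\<Union>s\<in>S. edges (r s) \<union> (edges (r s))\<inverse>)"
    and VF: "VF \<subseteq> V1" and EFVF: "EF \<subseteq> VF \<times> VF"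
  shows "y \<in> generate G S \<Longrightarrow> \<exists>p. is_walk E1 p \<and> hd p = v0 \<and> last p = \<phi>1 y v0 \<and> good VF EF p"
proof (induction rule: generate.induct)
  case one
  have "is_walk E1 [v0] \<and> hd [v0] = v0 \<and> last [v0] = \<phi>1 \<one>\<^bsub>G\<^esub> v0 \<and> good VF EF [v0]"
    using T1.act_one v0 unfolding good_def by simp
  then show ?case by blast
next
  case (incl s)
  have sc: "s \<in> carrier G" using incl SG by blast
  have "good VF EF (r s)"
    unfolding good_def
  proof (intro ballI, clarify)
    fix x x' assume e: "(x, x') \<in> edges (r s)"
    then have "(x, x') \<in> EF" using EF incl by blast
    moreover have "x \<in> V1" "x' \<in> V1" using e EFVF VF \<open>(x, x') \<in> EF\<close> by auto
    ultimately show "\<exists>z\<in>carrier G. \<exists>(b, b') \<in> EF. x = \<phi>1 z b \<and> x' = \<phi>1 z b'"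
      using T1.act_one monoid.one_closed[OF group.is_monoid[OF T1.grp]]
      by (intro bexI[of _ "\<one>\<^bsub>G\<^esub>"] bexI[of _ "(x, x')"]) auto
  qed
  then show ?case using r incl by blast
next
  case (inv s)
  have sc: "s \<in> carrier G" using inv SG by blast
  have ic: "inv\<^bsub>G\<^esub> s \<in> carrier G" using group.inv_closed[OF T1.grp sc] .
  define p where "p = map (\<phi>1 (inv\<^bsub>G\<^esub> s)) (rev (r s))"
  have rs: "is_walk E1 (r s)" "hd (r s) = v0" "last (r s) = \<phi>1 s v0" using r inv by auto
  have rne: "r s \<noteq> []" using rs by auto
  have rw: "is_walk E1 (rev (r s))" using is_walk_rev[of E1] T1.E_sym rs(1) by blast
  have "is_walk E1 p" unfolding p_def
    using is_walk_map[of E1 "rev (r s)" E1 "\<phi>1 (inv\<^bsub>G\<^esub> s)"] rw T1.act_E[OF ic] by blast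
  moreover have "hd p = v0" unfolding p_def using rne rs T1.act_inv1[OF sc v0]
    by (simp add: hd_map hd_rev)
  moreover have "last p = \<phi>1 (inv\<^bsub>G\<^esub> s) v0" unfolding p_def using rne rs
    by (simp add: last_map last_rev)
  moreover have "good VF EF p"
    unfolding good_def
  proof (intro ballI, clarify)
    fix x x' assume "(x, x') \<in> edges p"
    then obtain y y' where yy: "(y, y') \<in> edges (rev (r s))" "x = \<phi>1 (inv\<^bsub>G\<^esub> s) y" "x' = \<phi>1 (inv\<^bsub>G\<^esub> s) y'"
      unfolding p_def edges_map by auto
    then have "(y, y') \<in> EF" using EF inv edges_rev by blast
    then show "\<exists>z\<in>carrier G. \<exists>(b, b') \<in> EF. x = \<phi>1 z b \<and> x' = \<phi>1 z b'" using yy ic by blast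
  qed
  ultimately show ?case by blast
next
  case (eng y1 y2)
  have y1c: "y1 \<in> carrier G" and y2c: "y2 \<in> carrier G"
    using eng.hyps group.generate_incl[OF T1.grp SG] by blast+
  obtain p1 where p1: "is_walk E1 p1" "hd p1 = v0" "last p1 = \<phi>1 y1 v0" "good VF EF p1" using eng.IH by blast
  obtain p2 where p2: "is_walk E1 p2" "hd p2 = v0" "last p2 = \<phi>1 y2 v0" "good VF EF p2" using eng.IH by blast
  have p1ne: "p1 \<noteq> []" and p2ne: "p2 \<noteq> []" using p1 p2 by auto
  define B where "B = butlast p1"
  have p1B: "p1 = B @ [\<phi>1 y1 v0]" using p1ne p1(3) B_def append_butlast_last_id[of p1] by simp
  define m2 where "m2 = map (\<phi>1 y1) p2"
  have m2w: "is_walk E1 m2" unfolding m2_def by (rule is_walk_map[OF p2(1)], rule T1.act_E[OF y1c])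
  obtain T where m2T: "m2 = \<phi>1 y1 v0 # T" using p2ne p2(2) m2_def by (cases p2) auto
  define p where "p = B @ \<phi>1 y1 v0 # T"
  have "is_walk E1 p" unfolding p_def using is_walk_append[of E1 B "\<phi>1 y1 v0" T] p1(1) p1B m2w m2T by simp
  moreover have "hd p = v0" unfolding p_def using p1B p1(2) by (cases B) auto
  moreover have "last p = \<phi>1 (y1 \<otimes>\<^bsub>G\<^esub> y2) v0"
  proof -
    have "last p = last m2" unfolding p_def using m2T by simp
    also have "\<dots> = \<phi>1 y1 (\<phi>1 y2 v0)" unfolding m2_def using p2ne p2(3) by (simp add: last_map)
    also have "\<dots> = \<phi>1 (y1 \<otimes>\<^bsub>G\<^esub> y2) v0" using T1.act_mult[OF y1c y2c v0] by simp
    finally show ?thesis .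
  qed
  moreover have "good VF EF p"
  proof -
    have ep: "edges p = edges p1 \<union> edges m2"
      unfolding p_def using edges_append[of B "\<phi>1 y1 v0" T] p1B m2T by simp
    have "good VF EF m2"
      unfolding good_def
    proof (intro ballI, clarify)
      fix x x' assume "(x, x') \<in> edges m2"
      then obtain u u' where uu: "(u, u') \<in> edges p2" "x = \<phi>1 y1 u" "x' = \<phi>1 y1 u'"
        unfolding m2_def edges_map by auto
      then obtain z b b' where zb: "z \<in> carrier G" "(b, b') \<in> EF" "u = \<phi>1 z b" "u' = \<phi>1 z b'"
        using p2(4) unfolding good_def by blast
      have bV: "b \<in> V1" "b' \<in> V1" using zb(2) EFVF VF by auto
      have "x = \<phi>1 (y1 \<otimes>\<^bsub>G\<^esub> z) b" "x' = \<phi>1 (y1 \<otimes>\<^bsub>G\<^esub> z) b'"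
        using uu zb T1.act_mult[OF y1c zb(1)] bV by auto
      moreover have "y1 \<otimes>\<^bsub>G\<^esub> z \<in> carrier G" using y1c zb(1) monoid.m_closed[OF group.is_monoid[OF T1.grp]] by blast
      ultimately show "\<exists>z\<in>carrier G. \<exists>(b, b') \<in> EF. x = \<phi>1 z b \<and> x' = \<phi>1 z b'" using zb(2) by blast
    qed
    then show ?thesis using p1(4) ep unfolding good_def by blast
  qed
  ultimately show ?case by blast
qed

end



context twotrees begin

lemma rel_pair:
  assumes bV: "b \<in> V1" and cV: "c \<in> V1" and fb: "f b \<in> V2" and fc: "f c \<in> V2"
    and lc: "\<forall>s\<in>carrier G. \<phi>1 s c = c \<longrightarrow> T2.d (f c) (\<phi>2 s (f c)) \<le> L"
  shows "\<exists>D. \<forall>z\<in>carrier G. \<forall>z'\<in>carrier G. \<phi>1 z b = \<phi>1 z' c \<longrightarrow>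
        T2.d (\<phi>2 z (f b)) (\<phi>2 z' (f c)) \<le> D"
proof (cases "\<exists>g0\<in>carrier G. \<phi>1 g0 c = b")
  case False
  have "\<forall>z\<in>carrier G. \<forall>z'\<in>carrier G. \<phi>1 z b = \<phi>1 z' c \<longrightarrow> T2.d (\<phi>2 z (f b)) (\<phi>2 z' (f c)) \<le> 0"
  proof (intro ballI impI)
    interpret G: group G by (rule T1.grp)
    fix z z' assume z: "z \<in> carrier G" "z' \<in> carrier G" "\<phi>1 z b = \<phi>1 z' c"
    have "\<phi>1 (inv\<^bsub>G\<^esub> z \<otimes>\<^bsub>G\<^esub> z') c = \<phi>1 (inv\<^bsub>G\<^esub> z) (\<phi>1 z' c)" using T1.act_mult z cV by simp
    also have "\<dots> = b" using z(3) T1.act_inv1[OF z(1) bV] by simp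
    finally show "T2.d (\<phi>2 z (f b)) (\<phi>2 z' (f c)) \<le> 0" using False z by auto
  qed
  then show ?thesis by blast
next
  case True
  then obtain g0 where g0: "g0 \<in> carrier G" "\<phi>1 g0 c = b" by blast
  interpret G: group G by (rule T1.grp)
  have "\<forall>z\<in>carrier G. \<forall>z'\<in>carrier G. \<phi>1 z b = \<phi>1 z' c \<longrightarrow>
        T2.d (\<phi>2 z (f b)) (\<phi>2 z' (f c)) \<le> T2.d (f b) (\<phi>2 g0 (f c)) + L"
  proof (intro ballI impI)
    fix z z' assume z: "z \<in> carrier G" "z' \<in> carrier G" "\<phi>1 z b = \<phi>1 z' c"
    define g where "g = inv\<^bsub>G\<^esub> z \<otimes>\<^bsub>G\<^esub> z'"
    have gc: "g \<in> carrier G" using z g_def by simp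
    have "\<phi>1 g c = \<phi>1 (inv\<^bsub>G\<^esub> z) (\<phi>1 z' c)" using T1.act_mult z cV g_def by simp
    also have "\<dots> = b" using z(3) T1.act_inv1[OF z(1) bV] by simp
    finally have gcb: "\<phi>1 g c = b" .
    have zg: "z \<otimes>\<^bsub>G\<^esub> g = z'" using z g_def by (simp add: G.m_assoc[symmetric])
    have "\<phi>2 z' (f c) = \<phi>2 z (\<phi>2 g (f c))" using T2.act_mult[OF z(1) gc fc] zg by simp
    then have e1: "T2.d (\<phi>2 z (f b)) (\<phi>2 z' (f c)) = T2.d (f b) (\<phi>2 g (f c))"
      using T2.dist_iso[OF z(1) fb T2.act_V[OF gc fc]] by simp
    define s where "s = inv\<^bsub>G\<^esub> g0 \<otimes>\<^bsub>G\<^esub> g"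
    have sc: "s \<in> carrier G" using g0 gc s_def by simp
    have "\<phi>1 s c = \<phi>1 (inv\<^bsub>G\<^esub> g0) b" using T1.act_mult g0 gc cV s_def gcb by simp
    also have "\<dots> = c" using g0(2) T1.act_inv1[OF g0(1) cV] by simp
    finally have "\<phi>1 s c = c" .
    then have ls: "T2.d (f c) (\<phi>2 s (f c)) \<le> L" using lc sc by blast
    have g0s: "g0 \<otimes>\<^bsub>G\<^esub> s = g" using g0 gc s_def by (simp add: G.m_assoc[symmetric])
    have "\<phi>2 g (f c) = \<phi>2 g0 (\<phi>2 s (f c))" using T2.act_mult[OF g0(1) sc fc] g0s by simp
    then have e2: "T2.d (\<phi>2 g0 (f c)) (\<phi>2 g (f c)) = T2.d (f c) (\<phi>2 s (f c))"
      using T2.dist_iso[OF g0(1) fc T2.act_V[OF sc fc]] by simp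
    have "T2.d (f b) (\<phi>2 g (f c)) \<le> T2.d (f b) (\<phi>2 g0 (f c)) + T2.d (\<phi>2 g0 (f c)) (\<phi>2 g (f c))"
      by (rule T2.dist_tri) (use fb fc T2.act_V g0 gc in auto)
    then show "T2.d (\<phi>2 z (f b)) (\<phi>2 z' (f c)) \<le> T2.d (f b) (\<phi>2 g0 (f c)) + L"
      using e1 e2 ls by simp
  qed
  then show ?thesis by blast
qed

end



context twotrees begin

lemma partB:
  assumes v0: "v0 \<in> V1"
  shows "\<exists>w0\<in>V2. \<exists>C>0. \<exists>C'. \<forall>y\<in>carrier G. T2.d w0 (\<phi>2 y w0) \<le> C * T1.d v0 (\<phi>1 y v0) + C'"
proof -
  have "\<forall>s\<in>S. \<exists>q. is_walk E1 q \<and> red q \<and> hd q = v0 \<and> last q = \<phi>1 s v0"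
  proof
    fix s assume "s \<in> S"
    then have "s \<in> carrier G" using SG by blast
    then have "\<phi>1 s v0 \<in> V1" using T1.act_V v0 by blast
    then show "\<exists>q. is_walk E1 q \<and> red q \<and> hd q = v0 \<and> last q = \<phi>1 s v0"
      using T1.red_exists[OF v0] by blast
  qed
  then have "\<exists>r. \<forall>s\<in>S. is_walk E1 (r s) \<and> red (r s) \<and> hd (r s) = v0 \<and> last (r s) = \<phi>1 s v0"
    by (rule bchoice)
  then obtain r where r: "\<forall>s\<in>S. is_walk E1 (r s) \<and> red (r s) \<and> hd (r s) = v0 \<and> last (r s) = \<phi>1 s v0"
    ..
  define EF where "EF = (\<Union>s\<in>S. edges (r s) \<union> (edges (r s))\<inverse>)"
  define VF where "VF = insert v0 (\<Union>s\<in>S. set (r s))"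
  have rV: "set (r s) \<subseteq> V1" if "s \<in> S" for s
  proof -
    have "is_walk E1 (r s)" "hd (r s) = v0" using r that by auto
    then show ?thesis using T1.walk_V v0 by simp
  qed
  have VF: "VF \<subseteq> V1" unfolding VF_def using v0 rV by auto
  have EFVF: "EF \<subseteq> VF \<times> VF"
  proof
    fix e assume "e \<in> EF"
    then obtain s where s: "s \<in> S" "e \<in> edges (r s) \<or> e \<in> (edges (r s))\<inverse>" unfolding EF_def by blast
    obtain x y where e: "e = (x, y)" by (cases e)
    have "x \<in> set (r s) \<and> y \<in> set (r s)" using s(2) e edges_set[of x y "r s"] edges_set[of y x "r s"] by auto
    then show "e \<in> VF \<times> VF" unfolding VF_def using s(1) e by auto
  qed
  have finVF: "finite VF" unfolding VF_def using finS by simp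
  have finEF: "finite EF" unfolding EF_def using finS finite_edges by blast
  have EFE: "E1 b b'" if bb: "(b, b') \<in> EF" for b b'
  proof -
    obtain s where s: "s \<in> S" "(b, b') \<in> edges (r s) \<or> (b', b) \<in> edges (r s)" using bb unfolding EF_def by blast
    have w: "is_walk E1 (r s)" using r s(1) by blast
    show ?thesis using s(2) edges_walk[OF w] T1.E_sym by blast
  qed
  have "\<forall>c\<in>VF. \<exists>p. fst p \<in> V2 \<and> 0 \<le> snd p \<and> (\<forall>s\<in>carrier G. \<phi>1 s c = c \<longrightarrow> T2.d (fst p) (\<phi>2 s (fst p)) \<le> snd p)"
  proof
    fix c assume "c \<in> VF"
    then obtain w l where "w \<in> V2" "l \<ge> 0" "\<forall>s\<in>carrier G. \<phi>1 s c = c \<longrightarrow> T2.d w (\<phi>2 s w) \<le> l"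
      using quasi_fix VF by blast
    then show "\<exists>p. fst p \<in> V2 \<and> 0 \<le> snd p \<and> (\<forall>s\<in>carrier G. \<phi>1 s c = c \<longrightarrow> T2.d (fst p) (\<phi>2 s (fst p)) \<le> snd p)"
      by (intro exI[of _ "(w, l)"]) simp
  qed
  then have "\<exists>F. \<forall>c\<in>VF. fst (F c) \<in> V2 \<and> 0 \<le> snd (F c) \<and>
      (\<forall>s\<in>carrier G. \<phi>1 s c = c \<longrightarrow> T2.d (fst (F c)) (\<phi>2 s (fst (F c))) \<le> snd (F c))"
    by (rule bchoice)
  then obtain F where F: "\<forall>c\<in>VF. fst (F c) \<in> V2 \<and> 0 \<le> snd (F c) \<and>
      (\<forall>s\<in>carrier G. \<phi>1 s c = c \<longrightarrow> T2.d (fst (F c)) (\<phi>2 s (fst (F c))) \<le> snd (F c))"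
    ..
  define f where "f = (\<lambda>c. fst (F c))"
  define L where "L = (\<Sum>c\<in>VF. snd (F c))"
  have fV: "\<forall>c\<in>VF. f c \<in> V2" using F f_def by simp
  have lL: "snd (F c) \<le> L" if "c \<in> VF" for c
    unfolding L_def using that finVF F by (intro member_le_sum) auto
  have lc: "\<forall>s\<in>carrier G. \<phi>1 s c = c \<longrightarrow> T2.d (f c) (\<phi>2 s (f c)) \<le> L" if "c \<in> VF" for c
    using F that lL f_def by fastforce
  obtain D1 where D1: "\<forall>x\<in>VF \<times> VF. \<forall>z\<in>carrier G. \<forall>z'\<in>carrier G. \<phi>1 z (fst x) = \<phi>1 z' (snd x) \<longrightarrow>
        T2.d (\<phi>2 z (f (fst x))) (\<phi>2 z' (f (snd x))) \<le> D1"
  proof -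
    have "\<exists>D. \<forall>x\<in>VF \<times> VF. \<forall>z\<in>carrier G. \<forall>z'\<in>carrier G. \<phi>1 z (fst x) = \<phi>1 z' (snd x) \<longrightarrow>
        T2.d (\<phi>2 z (f (fst x))) (\<phi>2 z' (f (snd x))) \<le> D"
    proof (rule finite_bound)
      show "finite (VF \<times> VF)" using finVF by simp
    next
      fix x assume x: "x \<in> VF \<times> VF"
      show "\<exists>D. \<forall>z\<in>carrier G. \<forall>z'\<in>carrier G. \<phi>1 z (fst x) = \<phi>1 z' (snd x) \<longrightarrow>
        T2.d (\<phi>2 z (f (fst x))) (\<phi>2 z' (f (snd x))) \<le> D"
        by (rule rel_pair[where L=L]) (use x VF fV lc in auto)
    next
      fix x and D D' :: real
      assume "\<forall>z\<in>carrier G. \<forall>z'\<in>carrier G. \<phi>1 z (fst x) = \<phi>1 z' (snd x) \<longrightarrow>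
        T2.d (\<phi>2 z (f (fst x))) (\<phi>2 z' (f (snd x))) \<le> D" "D \<le> D'"
      then show "\<forall>z\<in>carrier G. \<forall>z'\<in>carrier G. \<phi>1 z (fst x) = \<phi>1 z' (snd x) \<longrightarrow>
        T2.d (\<phi>2 z (f (fst x))) (\<phi>2 z' (f (snd x))) \<le> D'" by force
    qed
    then show ?thesis using that by blast
  qed
  obtain D2 where D2: "\<forall>x\<in>EF. T2.d (f (fst x)) (f (snd x)) \<le> D2"
  proof -
    have "\<exists>D. \<forall>x\<in>EF. T2.d (f (fst x)) (f (snd x)) \<le> D"
      by (rule finite_bound[OF finEF]) auto
    then show ?thesis using that by blast
  qed
  define D where "D = max (max D1 D2) 0"
  have D0: "0 \<le> D" unfolding D_def by simp
  have rel: "\<forall>b\<in>VF. \<forall>c\<in>VF. \<forall>z\<in>carrier G. \<forall>z'\<in>carrier G. \<phi>1 z b = \<phi>1 z' c \<longrightarrow>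
        T2.d (\<phi>2 z (f b)) (\<phi>2 z' (f c)) \<le> D"
  proof (intro ballI impI)
    fix b c z z' assume "b \<in> VF" "c \<in> VF" "z \<in> carrier G" "z' \<in> carrier G" "\<phi>1 z b = \<phi>1 z' c"
    then have "T2.d (\<phi>2 z (f b)) (\<phi>2 z' (f c)) \<le> D1" using D1 by force
    then show "T2.d (\<phi>2 z (f b)) (\<phi>2 z' (f c)) \<le> D" unfolding D_def by linarith
  qed
  have eb: "\<forall>(b, b') \<in> EF. T2.d (f b) (f b') \<le> D"
  proof clarify
    fix b b' assume "(b, b') \<in> EF"
    then have "T2.d (f b) (f b') \<le> D2" using D2 by force
    then show "T2.d (f b) (f b') \<le> D" unfolding D_def by linarith
  qed
  define lmin where "lmin = Min (insert 1 ((\<lambda>(b, b'). len1 b b') ` EF))"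
  have lpos: "0 < lmin" unfolding lmin_def using finEF EFE T1.len_pos by (subst Min_gr_iff) auto
  have lle: "lmin \<le> len1 b b'" if "(b, b') \<in> EF" for b b'
    unfolding lmin_def using finEF that by (intro Min_le) auto
  have v0VF: "v0 \<in> VF" unfolding VF_def by simp
  have one: "\<one>\<^bsub>G\<^esub> \<in> carrier G" using monoid.one_closed[OF group.is_monoid[OF T1.grp]] .
  define C where "C = 2 * D / lmin + 1"
  have "0 \<le> 2 * D / lmin" using D0 lpos by simp
  then have Cpos: "C > 0" unfolding C_def by linarith
  have "\<forall>y\<in>carrier G. T2.d (f v0) (\<phi>2 y (f v0)) \<le> C * T1.d v0 (\<phi>1 y v0) + D"
  proof
    fix y assume y: "y \<in> carrier G"
    then have "y \<in> generate G S" using genS by simp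
    then obtain p where p: "is_walk E1 p" "hd p = v0" "last p = \<phi>1 y v0" "good VF EF p"
      using gen_walk[OF v0 r EF_def VF EFVF] by blast
    obtain q where q: "is_walk E1 q" "red q" "hd q = hd p" "last q = last p" "edges q \<subseteq> edges p"
      using T1.reduce[OF p(1)] by blast
    have gq: "good VF EF q" using p(4) q(5) unfolding good_def by blast
    have dq: "T1.d v0 (\<phi>1 y v0) = walk_weight len1 q" using T1.dist_red[OF q(1,2)] q p by simp
    have "\<forall>(x, x') \<in> edges q. lmin \<le> len1 x x'"
    proof clarify
      fix x x' assume "(x, x') \<in> edges q"
      then obtain z b b' where zb: "z \<in> carrier G" "(b, b') \<in> EF" "x = \<phi>1 z b" "x' = \<phi>1 z b'"
        using gq unfolding good_def by blast
      have "len1 x x' = len1 b b'" using T1.act_len[OF zb(1) EFE[OF zb(2)]] zb by simp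
      then show "lmin \<le> len1 x x'" using lle zb(2) by simp
    qed
    then have ml: "real (length q - 1) * lmin \<le> T1.d v0 (\<phi>1 y v0)" using T1.weight_lower[OF q(1)] dq by simp
    have qne: "q \<noteq> []" using q(1) by auto
    have "T2.d (\<phi>2 \<one>\<^bsub>G\<^esub> (f v0)) (\<phi>2 y (f v0)) \<le> D * (2 * real (length q - 1) + 1)"
      by (rule walk_bound[OF EFVF VF fV rel eb qne gq one y v0VF v0VF])
        (use q p T1.act_one v0 in simp_all)
    moreover have "\<phi>2 \<one>\<^bsub>G\<^esub> (f v0) = f v0" using T2.act_one fV v0VF by simp
    ultimately have b1: "T2.d (f v0) (\<phi>2 y (f v0)) \<le> 2 * D * real (length q - 1) + D"
      by (simp add: algebra_simps)
    have "real (length q - 1) \<le> T1.d v0 (\<phi>1 y v0) / lmin" using ml lpos by (simp add: field_simps)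
    then have "2 * D * real (length q - 1) \<le> 2 * D * (T1.d v0 (\<phi>1 y v0) / lmin)"
      using D0 mult_left_mono[of "real (length q - 1)" "T1.d v0 (\<phi>1 y v0) / lmin" "2 * D"] by linarith
    also have "\<dots> \<le> C * T1.d v0 (\<phi>1 y v0)"
    proof -
      have d0: "0 \<le> T1.d v0 (\<phi>1 y v0)" using T1.dist_nonneg v0 T1.act_V y by blast
      have "2 * D * (T1.d v0 (\<phi>1 y v0) / lmin) = (2 * D / lmin) * T1.d v0 (\<phi>1 y v0)" by simp
      also have "\<dots> \<le> C * T1.d v0 (\<phi>1 y v0)"
      proof -
        have "C * T1.d v0 (\<phi>1 y v0) = (2 * D / lmin) * T1.d v0 (\<phi>1 y v0) + T1.d v0 (\<phi>1 y v0)"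
          unfolding C_def by (simp only: distrib_right mult_1)
        then show ?thesis using d0 by linarith
      qed
      finally show ?thesis .
    qed
    finally show "T2.d (f v0) (\<phi>2 y (f v0)) \<le> C * T1.d v0 (\<phi>1 y v0) + D" using b1 by linarith
  qed
  then show ?thesis using Cpos fV v0VF by blast
qed

end



lemma poly_transfer:
  fixes t1 t2 :: "nat \<Rightarrow> real"
  assumes t1: "\<forall>n. 0 \<le> t1 n" and t2: "\<forall>n. t2 n \<le> C * t1 n + M" and C: "0 \<le> C"
    and P: "\<exists>P::int poly. \<forall>n. t1 n \<le> of_int (poly P (int n))"
  shows "\<exists>Q::int poly. \<forall>n. t2 n \<le> of_int (poly Q (int n))"
proof -
  obtain P :: "int poly" where P: "\<forall>n. t1 n \<le> of_int (poly P (int n))" using P by blast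
  define Q where "Q = smult \<lceil>C\<rceil> P + [:\<lceil>M\<rceil>:]"
  have "t2 n \<le> of_int (poly Q (int n))" for n
  proof -
    define p where "p = (of_int (poly P (int n)) :: real)"
    have tp: "t1 n \<le> p" using P p_def by simp
    have p0: "0 \<le> p" using t1 tp by (meson order.trans)
    have "t2 n \<le> C * t1 n + M" using t2 by blast
    also have "\<dots> \<le> C * p + M" using tp C by (simp add: mult_left_mono)
    also have "\<dots> \<le> of_int \<lceil>C\<rceil> * p + of_int \<lceil>M\<rceil>"
    proof -
      have "C * p \<le> of_int \<lceil>C\<rceil> * p" using p0 by (simp add: mult_right_mono)
      moreover have "M \<le> of_int \<lceil>M\<rceil>" by simp
      ultimately show ?thesis by linarith
    qed
    also have "\<dots> = of_int (poly Q (int n))" unfolding Q_def p_def by simp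
    finally show ?thesis .
  qed
  then show ?thesis by blast
qed

context twotrees begin

lemma Hbound: "\<exists>M\<ge>0. \<forall>i<length Hs. \<exists>w\<in>V2. \<forall>k\<in>Hs ! i. T2.d w (\<phi>2 k w) \<le> M"
proof -
  interpret G: group G by (rule T1.grp)
  have "\<exists>M. \<forall>i\<in>{..<length Hs}. \<exists>w\<in>V2. \<forall>k\<in>Hs ! i. T2.d w (\<phi>2 k w) \<le> M"
  proof (rule finite_bound)
    show "finite {..<length Hs}" by simp
  next
    fix i assume "i \<in> {..<length Hs}"
    then have i: "i < length Hs" by simp
    have sg: "subgroup (Hs ! i) G" using perip i unfolding peripheral_structure_def by simp
    have "Hs ! i \<subseteq> conjugate G \<one>\<^bsub>G\<^esub> (Hs ! i)"
    proof
      fix h assume h: "h \<in> Hs ! i"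
      then have "h \<in> carrier G" using subgroup.subset[OF sg] by blast
      then have "h = \<one>\<^bsub>G\<^esub> \<otimes>\<^bsub>G\<^esub> h \<otimes>\<^bsub>G\<^esub> inv\<^bsub>G\<^esub> \<one>\<^bsub>G\<^esub>" by simp
      then show "h \<in> conjugate G \<one>\<^bsub>G\<^esub> (Hs ! i)" unfolding conjugate_def using h by blast
    qed
    then have "elliptic V2 E2 \<phi>2 (Hs ! i)" using hyp2 sg i by blast
    then obtain w l where "w \<in> V2" "\<forall>k\<in>Hs ! i. T2.d w (\<phi>2 k w) \<le> l"
      using T2.ell_bound subgroup.subset[OF sg] by blast
    then show "\<exists>D. \<exists>w\<in>V2. \<forall>k\<in>Hs ! i. T2.d w (\<phi>2 k w) \<le> D" by blast
  next
    fix i and D D' :: real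
    assume "\<exists>w\<in>V2. \<forall>k\<in>Hs ! i. T2.d w (\<phi>2 k w) \<le> D" "D \<le> D'"
    then show "\<exists>w\<in>V2. \<forall>k\<in>Hs ! i. T2.d w (\<phi>2 k w) \<le> D'" by force
  qed
  then obtain M where M: "\<forall>i\<in>{..<length Hs}. \<exists>w\<in>V2. \<forall>k\<in>Hs ! i. T2.d w (\<phi>2 k w) \<le> M" by blast
  have "\<forall>i<length Hs. \<exists>w\<in>V2. \<forall>k\<in>Hs ! i. T2.d w (\<phi>2 k w) \<le> max M 0"
  proof (intro allI impI)
    fix i assume "i < length Hs"
    then obtain w where "w \<in> V2" "\<forall>k\<in>Hs ! i. T2.d w (\<phi>2 k w) \<le> M" using M by auto
    then show "\<exists>w\<in>V2. \<forall>k\<in>Hs ! i. T2.d w (\<phi>2 k w) \<le> max M 0" by force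
  qed
  then show ?thesis by (intro exI[of _ "max M 0"]) simp
qed

lemma ell_case:
  assumes h: "h \<in> carrier G"
    and ell: "(\<exists>v\<in>V2. \<phi>2 h v = v) \<or> (\<exists>u v. E2 u v \<and> \<phi>2 h u = v \<and> \<phi>2 h v = u)"
    and M: "\<forall>i<length Hs. \<exists>w\<in>V2. \<forall>k\<in>Hs ! i. T2.d w (\<phi>2 k w) \<le> M"
  shows "trans_length V2 E2 len2 \<phi>2 h \<le> M"
proof -
  interpret G: group G by (rule T1.grp)
  define K where "K = generate G {h}"
  have Ksg: "subgroup K G" unfolding K_def by (rule G.generate_is_subgroup) (use h in simp)
  have hK: "h \<in> K" unfolding K_def by (rule generate.incl) simp
  have "elliptic V2 E2 \<phi>2 K"
    using ell
  proof
    assume "\<exists>v\<in>V2. \<phi>2 h v = v"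
    then obtain v where v: "v \<in> V2" "\<phi>2 h v = v" by blast
    have "subgroup {k \<in> carrier G. \<phi>2 k ` {v} = {v}} G" by (rule T2.stab_subgroup) (use v in simp)
    moreover have "{h} \<subseteq> {k \<in> carrier G. \<phi>2 k ` {v} = {v}}" using v h by simp
    ultimately have "K \<subseteq> {k \<in> carrier G. \<phi>2 k ` {v} = {v}}" unfolding K_def
      by (intro G.generate_subgroup_incl)
    then show ?thesis unfolding elliptic_def using v by auto
  next
    assume "\<exists>u v. E2 u v \<and> \<phi>2 h u = v \<and> \<phi>2 h v = u"
    then obtain u v where uv: "E2 u v" "\<phi>2 h u = v" "\<phi>2 h v = u" by blast
    have "subgroup {k \<in> carrier G. \<phi>2 k ` {u, v} = {u, v}} G" by (rule T2.stab_subgroup) (use T2.E_V uv in simp)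
    moreover have "{h} \<subseteq> {k \<in> carrier G. \<phi>2 k ` {u, v} = {u, v}}" using uv h by auto
    ultimately have "K \<subseteq> {k \<in> carrier G. \<phi>2 k ` {u, v} = {u, v}}" unfolding K_def
      by (intro G.generate_subgroup_incl)
    then show ?thesis unfolding elliptic_def using uv by blast
  qed
  then obtain i x where ix: "i < length Hs" "x \<in> carrier G" "K \<subseteq> conjugate G x (Hs ! i)"
    using hyp2 Ksg by blast
  then obtain k where k: "k \<in> Hs ! i" "h = x \<otimes>\<^bsub>G\<^esub> k \<otimes>\<^bsub>G\<^esub> inv\<^bsub>G\<^esub> x"
    using hK unfolding conjugate_def by blast
  have sg: "subgroup (Hs ! i) G" using perip ix(1) unfolding peripheral_structure_def by simp
  have kc: "k \<in> carrier G" using subgroup.subset[OF sg] k(1) by blast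
  obtain w where w: "w \<in> V2" "\<forall>k\<in>Hs ! i. T2.d w (\<phi>2 k w) \<le> M" using M ix(1) by blast
  have xw: "\<phi>2 x w \<in> V2" using T2.act_V ix(2) w(1) by blast
  have hx: "h \<otimes>\<^bsub>G\<^esub> x = x \<otimes>\<^bsub>G\<^esub> k" using k(2) ix(2) kc by (simp add: G.m_assoc)
  have "\<phi>2 h (\<phi>2 x w) = \<phi>2 (h \<otimes>\<^bsub>G\<^esub> x) w" using T2.act_mult[OF h ix(2) w(1)] by simp
  also have "\<dots> = \<phi>2 x (\<phi>2 k w)" using hx T2.act_mult[OF ix(2) kc w(1)] by simp
  finally have e: "\<phi>2 h (\<phi>2 x w) = \<phi>2 x (\<phi>2 k w)" .
  have "T2.tln h \<le> T2.d (\<phi>2 x w) (\<phi>2 h (\<phi>2 x w))" using T2.tl_le[OF h xw] .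
  also have "\<dots> = T2.d w (\<phi>2 k w)" using e T2.dist_iso[OF ix(2) w(1) T2.act_V[OF kc w(1)]] by simp
  also have "\<dots> \<le> M" using w k(1) by blast
  finally show ?thesis unfolding T2.tln_def .
qed

end



context twotrees begin

lemma compare: "\<exists>C>0. \<exists>M\<ge>0. \<forall>h\<in>carrier G.
   trans_length V2 E2 len2 \<phi>2 h \<le> C * trans_length V1 E1 len1 \<phi>1 h + M"
proof -
  obtain v0 where v0: "v0 \<in> V1" using T1.V_ne by blast
  obtain w0 C C' where w0: "w0 \<in> V2" and C: "C > 0"
    and B: "\<forall>y\<in>carrier G. T2.d w0 (\<phi>2 y w0) \<le> C * T1.d v0 (\<phi>1 y v0) + C'"
    using partB[OF v0] by blast
  obtain M where M0: "M \<ge> 0" and M: "\<forall>i<length Hs. \<exists>w\<in>V2. \<forall>k\<in>Hs ! i. T2.d w (\<phi>2 k w) \<le> M"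
    using Hbound by blast
  have "\<forall>h\<in>carrier G. T2.tln h \<le> C * T1.tln h + M"
  proof
    fix h assume h: "h \<in> carrier G"
    have t1: "0 \<le> T1.tln h" using T1.tl_nonneg[OF h] .
    then have cm: "0 \<le> C * T1.tln h" using C by simp
    consider (ell) "(\<exists>v\<in>V2. \<phi>2 h v = v) \<or> (\<exists>u v. E2 u v \<and> \<phi>2 h u = v \<and> \<phi>2 h v = u)"
      | (hyp) "\<exists>a\<in>V2. \<forall>n. real n * T2.d a (\<phi>2 h a) \<le> T2.d a (\<phi>2 (h [^]\<^bsub>G\<^esub> n) a)"
      using T2.axis[OF h] by blast
    then show "T2.tln h \<le> C * T1.tln h + M"
    proof cases
      case ell
      then have "T2.tln h \<le> M" using ell_case[OF h _ M] unfolding T2.tln_def by blast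
      then show ?thesis using cm by linarith
    next
      case hyp
      then obtain a where a: "a \<in> V2" "\<forall>n. real n * T2.d a (\<phi>2 h a) \<le> T2.d a (\<phi>2 (h [^]\<^bsub>G\<^esub> n) a)"
        by blast
      have ha: "\<phi>2 h a \<in> V2" using T2.act_V h a(1) by blast
      have key: "T2.d a (\<phi>2 h a) \<le> C * T1.d v (\<phi>1 h v)" if v: "v \<in> V1" for v
      proof (rule ccontr)
        assume "\<not> ?thesis"
        then have dpos: "0 < T2.d a (\<phi>2 h a) - C * T1.d v (\<phi>1 h v)" by simp
        define K where "K = 2 * T2.d a w0 + C * (2 * T1.d v0 v) + C'"
        have bound: "real n * T2.d a (\<phi>2 h a) \<le> K + real n * (C * T1.d v (\<phi>1 h v))" for n
        proof -
          define hn where "hn = h [^]\<^bsub>G\<^esub> n"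
          have hn: "hn \<in> carrier G" unfolding hn_def by (rule T1.pow_closed[OF h])
          have hna: "\<phi>2 hn a \<in> V2" "\<phi>2 hn w0 \<in> V2" using T2.act_V hn a(1) w0 by auto
          have hnv: "\<phi>1 hn v \<in> V1" "\<phi>1 hn v0 \<in> V1" using T1.act_V hn v v0 by auto
          have "T2.d a (\<phi>2 hn a) \<le> T2.d a w0 + T2.d w0 (\<phi>2 hn a)"
            using T2.dist_tri a(1) w0 hna by blast
          also have "T2.d w0 (\<phi>2 hn a) \<le> T2.d w0 (\<phi>2 hn w0) + T2.d (\<phi>2 hn w0) (\<phi>2 hn a)"
            using T2.dist_tri w0 hna by blast
          also have "T2.d (\<phi>2 hn w0) (\<phi>2 hn a) = T2.d a w0"
            using T2.dist_iso[OF hn w0 a(1)] T2.dist_sym a(1) w0 by simp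
          also have "T2.d w0 (\<phi>2 hn w0) \<le> C * T1.d v0 (\<phi>1 hn v0) + C'" using B hn by blast
          also have "T1.d v0 (\<phi>1 hn v0) \<le> T1.d v0 v + T1.d v (\<phi>1 hn v0)"
            using T1.dist_tri v0 v hnv by blast
          also have "T1.d v (\<phi>1 hn v0) \<le> T1.d v (\<phi>1 hn v) + T1.d (\<phi>1 hn v) (\<phi>1 hn v0)"
            using T1.dist_tri v hnv by blast
          also have "T1.d (\<phi>1 hn v) (\<phi>1 hn v0) = T1.d v0 v"
            using T1.dist_iso[OF hn v v0] T1.dist_sym v v0 by simp
          also have "T1.d v (\<phi>1 hn v) \<le> real n * T1.d v (\<phi>1 h v)"
            unfolding hn_def by (rule T1.dist_pow[OF h v])
          finally have "T2.d a (\<phi>2 hn a) \<le> T2.d a w0 + (C * (T1.d v0 v + (real n * T1.d v (\<phi>1 h v) + T1.d v0 v)) + C' + T2.d a w0)"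
            using C by (simp add: mult_left_mono)
          moreover have "real n * T2.d a (\<phi>2 h a) \<le> T2.d a (\<phi>2 hn a)" using a(2) hn_def by blast
          ultimately show ?thesis unfolding K_def by (simp add: algebra_simps)
        qed
        obtain n :: nat where n: "K / (T2.d a (\<phi>2 h a) - C * T1.d v (\<phi>1 h v)) < real n"
          using reals_Archimedean2 by blast
        then have "K < real n * (T2.d a (\<phi>2 h a) - C * T1.d v (\<phi>1 h v))"
          using dpos by (simp add: pos_divide_less_eq mult.commute)
        then show False using bound[of n] by (simp add: algebra_simps)
      qed
      have "T2.tln h / C \<le> T1.tln h"
      proof (rule T1.tl_greatest)
        fix v assume v: "v \<in> V1"
        have "T2.tln h \<le> T2.d a (\<phi>2 h a)" using T2.tl_le[OF h a(1)] .
        also have "\<dots> \<le> C * T1.d v (\<phi>1 h v)" using key[OF v] .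
        finally show "T2.tln h / C \<le> T1.d v (\<phi>1 h v)" using C by (simp add: divide_le_eq mult.commute)
      qed
      then have "T2.tln h \<le> C * T1.tln h" using C by (simp add: divide_le_eq mult.commute)
      then show ?thesis using M0 by linarith
    qed
  qed
  then show ?thesis using C M0 unfolding T1.tln_def T2.tln_def by blast
qed

end

lemma twotrees_intro:
  assumes "group G" "metric_G_tree G V1 E1 len1 \<phi>1" "metric_G_tree G V2 E2 len2 \<phi>2"
    "finite S" "S \<subseteq> carrier G" "generate G S = carrier G" "peripheral_structure G Hs"
    "\<forall>K. subgroup K G \<longrightarrow> (elliptic V1 E1 \<phi>1 K \<longleftrightarrow>
            (\<exists>i<length Hs. \<exists>x\<in>carrier G. K \<subseteq> conjugate G x (Hs ! i)))"
    "\<forall>K. subgroup K G \<longrightarrow> (elliptic V2 E2 \<phi>2 K \<longleftrightarrow>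
            (\<exists>i<length Hs. \<exists>x\<in>carrier G. K \<subseteq> conjugate G x (Hs ! i)))"
  shows "twotrees G V1 E1 len1 \<phi>1 V2 E2 len2 \<phi>2 Hs S"
  using assms unfolding twotrees_def twotrees_axioms_def gtree_def by blast

theorem lemma3p1:
  fixes G :: "('g, 'b) monoid_scheme"
    and Hs :: "'g set list"
    and V1 :: "'v set" and E1 :: "'v \<Rightarrow> 'v \<Rightarrow> bool" and len1 :: "'v \<Rightarrow> 'v \<Rightarrow> real"
    and \<phi>1 :: "'g \<Rightarrow> 'v \<Rightarrow> 'v"
    and V2 :: "'w set" and E2 :: "'w \<Rightarrow> 'w \<Rightarrow> bool" and len2 :: "'w \<Rightarrow> 'w \<Rightarrow> real"
    and \<phi>2 :: "'g \<Rightarrow> 'w \<Rightarrow> 'w"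
    and \<alpha> :: "'g \<Rightarrow> 'g" and g :: 'g
  assumes "hyperbolic_group G" and "torsion_free G"
    and "peripheral_structure G Hs"
    and "metric_G_tree G V1 E1 len1 \<phi>1" and "metric_G_tree G V2 E2 len2 \<phi>2"
    and "\<forall>K. subgroup K G \<longrightarrow> (elliptic V1 E1 \<phi>1 K \<longleftrightarrow>
            (\<exists>i<length Hs. \<exists>x\<in>carrier G. K \<subseteq> conjugate G x (Hs ! i)))"
    and "\<forall>K. subgroup K G \<longrightarrow> (elliptic V2 E2 \<phi>2 K \<longleftrightarrow>
            (\<exists>i<length Hs. \<exists>x\<in>carrier G. K \<subseteq> conjugate G x (Hs ! i)))"
    and "\<alpha> \<in> iso G G" and "preserves_peripheral G Hs \<alpha>"
    and "g \<in> carrier G"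
  shows "polynomial_growth V1 E1 len1 \<phi>1 \<alpha> g \<longleftrightarrow> polynomial_growth V2 E2 len2 \<phi>2 \<alpha> g"
proof -
  have grp: "group G" using assms(1) unfolding hyperbolic_group_def by blast
  obtain S where S: "finite_gen_set G S" using assms(1) unfolding hyperbolic_group_def by blast
  have S': "finite S" "S \<subseteq> carrier G" "generate G S = carrier G" using S unfolding finite_gen_set_def by auto
  have tt12: "twotrees G V1 E1 len1 \<phi>1 V2 E2 len2 \<phi>2 Hs S"
    by (rule twotrees_intro) (use grp S' assms in auto)
  have tt21: "twotrees G V2 E2 len2 \<phi>2 V1 E1 len1 \<phi>1 Hs S"
    by (rule twotrees_intro) (use grp S' assms in auto)
  obtain C12 M12 where C12: "C12 > 0" and B12: "\<forall>h\<in>carrier G.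
      trans_length V2 E2 len2 \<phi>2 h \<le> C12 * trans_length V1 E1 len1 \<phi>1 h + M12"
    using twotrees.compare[OF tt12] by blast
  obtain C21 M21 where C21: "C21 > 0" and B21: "\<forall>h\<in>carrier G.
      trans_length V1 E1 len1 \<phi>1 h \<le> C21 * trans_length V2 E2 len2 \<phi>2 h + M21"
    using twotrees.compare[OF tt21] by blast
  have ac: "(\<alpha> ^^ n) g \<in> carrier G" for n
  proof (induction n)
    case 0 then show ?case using assms(10) by simp
  next
    case (Suc n)
    have "\<alpha> \<in> carrier G \<rightarrow> carrier G" using assms(8) unfolding iso_def hom_def by blast
    then show ?case using Suc by auto
  qed
  have nn1: "0 \<le> trans_length V1 E1 len1 \<phi>1 h" if "h \<in> carrier G" for h
    using gtree.tl_nonneg[OF twotrees.axioms(1)[OF tt12] that] unfolding gtree.tln_def[OF twotrees.axioms(1)[OF tt12]] .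
  have nn2: "0 \<le> trans_length V2 E2 len2 \<phi>2 h" if "h \<in> carrier G" for h
    using gtree.tl_nonneg[OF twotrees.axioms(1)[OF tt21] that] unfolding gtree.tln_def[OF twotrees.axioms(1)[OF tt21]] .
  show ?thesis unfolding polynomial_growth_def
  proof
    assume "\<exists>P::int poly. \<forall>n. trans_length V1 E1 len1 \<phi>1 ((\<alpha> ^^ n) g) \<le> of_int (poly P (int n))"
    then show "\<exists>P::int poly. \<forall>n. trans_length V2 E2 len2 \<phi>2 ((\<alpha> ^^ n) g) \<le> of_int (poly P (int n))"
      by (rule poly_transfer[rotated 3]) (use nn1 ac B12 C12 in auto)
  next
    assume "\<exists>P::int poly. \<forall>n. trans_length V2 E2 len2 \<phi>2 ((\<alpha> ^^ n) g) \<le> of_int (poly P (int n))"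
    then show "\<exists>P::int poly. \<forall>n. trans_length V1 E1 len1 \<phi>1 ((\<alpha> ^^ n) g) \<le> of_int (poly P (int n))"
      by (rule poly_transfer[rotated 3]) (use nn2 ac B21 C21 in auto)
  qed
qed


end
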